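(* Let $C$ be a program and $e,e'$ expressions such that the programs involved have total semantics, and let $\Phi_{\langle C,e,e'\rangle}(f)(\sigma)=[\![e]\!](\sigma)\cdot f^\dagger([\![C]\!](\sigma))+[\![e']\!](\sigma)\cdot\eta(\sigma)$. Then for all $n\in\mathbb N$, \[\Phi^{n+1}_{\langle C,e,e'\rangle}(\lambda x.\mathbf 0)=\sum_{k=0}^{n}[\![(\mathsf{assume}\ e;C)^k;\mathsf{assume}\ e']\!],\] where $D^0=\mathsf{skip}$, $D^{k+1}=D^k;D$, and the sum is pointwise.
   Context: $\mathcal A=\langle U,+,\cdot,\mathbf 0,\mathbf 1\rangle$ is a partial semiring ($+$ commutative, associative, possibly partial, unit $\mathbf 0$; $\cdot$ total, associative, unit $\mathbf 1$; two-sided distributivity; $\mathbf 0$ annihilates), naturally ordered, Scott continuous, with a top element. Infinite sums are suprema of finite partial sums. $\mathcal W(\Sigma)$: maps $m:\Sigma\to U$ with countable support and defined mass, with pointwise operations. $\eta(\sigma)(\tau)=\mathbf 1$ if $\sigma=\tau$ else $\mathbf 0$; $f^\dagger(m)(\tau)=\sum_{\sigma\in\mathrm{supp}(m)}m(\sigma)\cdot f(\sigma)(\tau)$. Program semantics: $[\![\mathsf{skip}]\!](\sigma)=\eta(\sigma)$; $[\![C_1;C_2]\!](\sigma)=[\![C_2]\!]^\dagger([\![C_1]\!](\sigma))$; $[\![\mathsf{assume}\ e]\!](\sigma)=[\![e]\!](\sigma)\cdot\eta(\sigma)$. An expression $e$ is a test $b$ (Boolean combination of $\mathsf{true},\mathsf{false}$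 and primitive tests $t\subseteq\Sigma$, with $[\![b]\!](\sigma)\in\{\mathbf 0,\mathbf 1\}$, $[\![t]\!](\sigma)=\mathbf 1$ iff $\sigma\in t$) or a weight $u\in U$ with $[\![u]\!](\sigma)=u$. *)

theory Defs
  imports Main "HOL-Library.Countable_Set"
begin

text \<open>A partial semiring over carrier type 'u. Partial addition is modelled as an
option-valued operation (None = undefined).\<close>

record 'u psemiring =
  padd :: "'u \<Rightarrow> 'u \<Rightarrow> 'u option"
  pmul :: "'u \<Rightarrow> 'u \<Rightarrow> 'u"
  pzero :: 'u
  pone :: 'u

definition nle :: "'u psemiring \<Rightarrow> 'u \<Rightarrow> 'u \<Rightarrow> bool" where
  "nle A a b \<longleftrightarrow> (\<exists>c. padd A a c = Some b)"

definition is_lub :: "'u psemiring \<Rightarrow> 'u set \<Rightarrow> 'u \<Rightarrow> bool" where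
  "is_lub A S u \<longleftrightarrow> (\<forall>s\<in>S. nle A s u) \<and> (\<forall>v. (\<forall>s\<in>S. nle A s v) \<longrightarrow> nle A u v)"

definition directed :: "'u psemiring \<Rightarrow> 'u set \<Rightarrow> bool" where
  "directed A D \<longleftrightarrow> D \<noteq> {} \<and> (\<forall>x\<in>D. \<forall>y\<in>D. \<exists>z\<in>D. nle A x z \<and> nle A y z)"

definition partial_semiring :: "'u psemiring \<Rightarrow> bool" where
  "partial_semiring A \<longleftrightarrow>
     \<comment> \<open>partial commutative monoid\<close>
     (\<forall>a b. padd A a b = padd A b a) \<and>
     (\<forall>a b c. Option.bind (padd A a b) (\<lambda>x. padd A x c) = Option.bind (padd A b c) (\<lambda>y. padd A a y)) \<and>
     (\<forall>a. padd A a (pzero A) = Some a) \<and>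
     \<comment> \<open>multiplicative monoid\<close>
     (\<forall>a b c. pmul A (pmul A a b) c = pmul A a (pmul A b c)) \<and>
     (\<forall>a. pmul A (pone A) a = a \<and> pmul A a (pone A) = a) \<and>
     \<comment> \<open>two-sided distributivity\<close>
     (\<forall>a b c d. padd A b c = Some d \<longrightarrow>
        padd A (pmul A a b) (pmul A a c) = Some (pmul A a d) \<and>
        padd A (pmul A b a) (pmul A c a) = Some (pmul A d a)) \<and>
     \<comment> \<open>zero annihilates\<close>
     (\<forall>a. pmul A (pzero A) a = pzero A \<and> pmul A a (pzero A) = pzero A)"

definition naturally_ordered :: "'u psemiring \<Rightarrow> bool" where
  "naturally_ordered A \<longleftrightarrow> (\<forall>a b. nle A a b \<and> nle A b a \<longrightarrow> a = b)"

definition scott_continuous :: "'u psemiring \<Rightarrow> bool" where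
  "scott_continuous A \<longleftrightarrow>
     (\<forall>D. directed A D \<longrightarrow> (\<exists>u. is_lub A D u)) \<and>
     (\<forall>D u a. directed A D \<longrightarrow> is_lub A D u \<longrightarrow>
        is_lub A (pmul A a ` D) (pmul A a u) \<and> is_lub A ((\<lambda>d. pmul A d a) ` D) (pmul A u a)) \<and>
     (\<forall>D u b. directed A D \<longrightarrow> is_lub A D u \<longrightarrow> (\<forall>d\<in>D. padd A d b \<noteq> None) \<longrightarrow>
        (\<exists>s. padd A u b = Some s \<and> is_lub A ((\<lambda>d. the (padd A d b)) ` D) s))"

definition has_top :: "'u psemiring \<Rightarrow> bool" where
  "has_top A \<longleftrightarrow> (\<exists>t. \<forall>a. nle A a t)"

definition good_semiring :: "'u psemiring \<Rightarrow> bool" where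
  "good_semiring A \<longleftrightarrow> partial_semiring A \<and> naturally_ordered A \<and> scott_continuous A \<and> has_top A"

inductive fsum_rel :: "'u psemiring \<Rightarrow> ('a \<Rightarrow> 'u) \<Rightarrow> 'a set \<Rightarrow> 'u \<Rightarrow> bool"
  for A f where
  empty: "fsum_rel A f {} (pzero A)"
| insert: "\<lbrakk>finite F; x \<notin> F; fsum_rel A f F s; padd A s (f x) = Some s'\<rbrakk>
            \<Longrightarrow> fsum_rel A f (insert x F) s'"

definition has_psum :: "'u psemiring \<Rightarrow> ('a \<Rightarrow> 'u) \<Rightarrow> 'a set \<Rightarrow> 'u \<Rightarrow> bool" where
  "has_psum A f S u \<longleftrightarrow>
     (\<forall>F. finite F \<and> F \<subseteq> S \<longrightarrow> (\<exists>s. fsum_rel A f F s)) \<and>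
     is_lub A {s. \<exists>F. finite F \<and> F \<subseteq> S \<and> fsum_rel A f F s} u"

definition psum :: "'u psemiring \<Rightarrow> ('a \<Rightarrow> 'u) \<Rightarrow> 'a set \<Rightarrow> 'u option" where
  "psum A f S = (if \<exists>u. has_psum A f S u then Some (THE u. has_psum A f S u) else None)"

definition supp :: "'u psemiring \<Rightarrow> ('s \<Rightarrow> 'u) \<Rightarrow> 's set" where
  "supp A m = {\<sigma>. m \<sigma> \<noteq> pzero A}"

definition inW :: "'u psemiring \<Rightarrow> ('s \<Rightarrow> 'u) \<Rightarrow> bool" where
  "inW A m \<longleftrightarrow> countable (supp A m) \<and> psum A m (supp A m) \<noteq> None"

definition eta :: "'u psemiring \<Rightarrow> 's \<Rightarrow> 's \<Rightarrow> 'u" where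
  "eta A \<sigma> \<tau> = (if \<sigma> = \<tau> then pone A else pzero A)"

definition wzero :: "'u psemiring \<Rightarrow> 's \<Rightarrow> 'u" where
  "wzero A = (\<lambda>_. pzero A)"

definition wscale :: "'u psemiring \<Rightarrow> 'u \<Rightarrow> ('s \<Rightarrow> 'u) \<Rightarrow> 's \<Rightarrow> 'u" where
  "wscale A u m = (\<lambda>\<tau>. pmul A u (m \<tau>))"

definition wadd :: "'u psemiring \<Rightarrow> ('s \<Rightarrow> 'u) \<Rightarrow> ('s \<Rightarrow> 'u) \<Rightarrow> ('s \<Rightarrow> 'u) option" where
  "wadd A m1 m2 =
     (if (\<forall>\<tau>. padd A (m1 \<tau>) (m2 \<tau>) \<noteq> None) \<and> inW A (\<lambda>\<tau>. the (padd A (m1 \<tau>) (m2 \<tau>)))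
      then Some (\<lambda>\<tau>. the (padd A (m1 \<tau>) (m2 \<tau>))) else None)"

fun wsum :: "'u psemiring \<Rightarrow> ('s \<Rightarrow> 'u) list \<Rightarrow> ('s \<Rightarrow> 'u) option" where
  "wsum A [] = Some (wzero A)"
| "wsum A (m # ms) = Option.bind (wsum A ms) (wadd A m)"

definition bind :: "'u psemiring \<Rightarrow> ('s \<Rightarrow> 's \<Rightarrow> 'u) \<Rightarrow> ('s \<Rightarrow> 'u) \<Rightarrow> ('s \<Rightarrow> 'u) option" where
  "bind A f m =
     (let r = (\<lambda>\<tau>. psum A (\<lambda>\<sigma>. pmul A (m \<sigma>) (f \<sigma> \<tau>)) (supp A m)) in
      if (\<forall>\<tau>. r \<tau> \<noteq> None) \<and> inW A (\<lambda>\<tau>. the (r \<tau>)) then Some (\<lambda>\<tau>. the (r \<tau>)) else None)"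

definition lift_kernel :: "('s \<Rightarrow> 'a option) \<Rightarrow> ('s \<Rightarrow> 'a) option" where
  "lift_kernel g = (if \<forall>\<sigma>. g \<sigma> \<noteq> None then Some (\<lambda>\<sigma>. the (g \<sigma>)) else None)"

datatype 's test = TTrue | TFalse | TPrim "'s set" | TNot "'s test"
  | TAnd "'s test" "'s test" | TOr "'s test" "'s test"

fun test_sem :: "'s test \<Rightarrow> 's \<Rightarrow> bool" where
  "test_sem TTrue \<sigma> = True"
| "test_sem TFalse \<sigma> = False"
| "test_sem (TPrim t) \<sigma> = (\<sigma> \<in> t)"
| "test_sem (TNot b) \<sigma> = (\<not> test_sem b \<sigma>)"
| "test_sem (TAnd b c) \<sigma> = (test_sem b \<sigma> \<and> test_sem c \<sigma>)"
| "test_sem (TOr b c) \<sigma> = (test_sem b \<sigma> \<or> test_sem c \<sigma>)"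

datatype ('s, 'u) expr = ETest "'s test" | EWeight 'u

fun esem :: "'u psemiring \<Rightarrow> ('s, 'u) expr \<Rightarrow> 's \<Rightarrow> 'u" where
  "esem A (ETest b) \<sigma> = (if test_sem b \<sigma> then pone A else pzero A)"
| "esem A (EWeight u) \<sigma> = u"

text \<open>Programs: skip, sequencing, assume, and an arbitrary atomic program given by
its (possibly undefined) kernel semantics, standing for an arbitrary program C.\<close>
datatype ('s, 'u) prog = Skip | Seq "('s, 'u) prog" "('s, 'u) prog"
  | Assume "('s, 'u) expr" | Atom "'s \<Rightarrow> 's \<Rightarrow> 'u"

fun sem :: "'u psemiring \<Rightarrow> ('s, 'u) prog \<Rightarrow> 's \<Rightarrow> ('s \<Rightarrow> 'u) option" where
  "sem A Skip \<sigma> = Some (eta A \<sigma>)"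
| "sem A (Assume e) \<sigma> = Some (wscale A (esem A e \<sigma>) (eta A \<sigma>))"
| "sem A (Atom K) \<sigma> = (if inW A (K \<sigma>) then Some (K \<sigma>) else None)"
| "sem A (Seq C1 C2) \<sigma> =
     (case sem A C1 \<sigma> of None \<Rightarrow> None
      | Some m \<Rightarrow> if \<forall>\<sigma>'\<in>supp A m. sem A C2 \<sigma>' \<noteq> None
                  then bind A (\<lambda>\<sigma>'. the (sem A C2 \<sigma>')) m else None)"

definition total_sem :: "'u psemiring \<Rightarrow> ('s, 'u) prog \<Rightarrow> bool" where
  "total_sem A C \<longleftrightarrow> (\<forall>\<sigma>. sem A C \<sigma> \<noteq> None)"

fun ppow :: "('s, 'u) prog \<Rightarrow> nat \<Rightarrow> ('s, 'u) prog" where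
  "ppow D 0 = Skip"
| "ppow D (Suc k) = Seq (ppow D k) D"

definition Phi :: "'u psemiring \<Rightarrow> ('s, 'u) prog \<Rightarrow> ('s, 'u) expr \<Rightarrow> ('s, 'u) expr
                   \<Rightarrow> ('s \<Rightarrow> 's \<Rightarrow> 'u) \<Rightarrow> ('s \<Rightarrow> 's \<Rightarrow> 'u) option" where
  "Phi A C e e' f = lift_kernel (\<lambda>\<sigma>.
     Option.bind (sem A C \<sigma>) (\<lambda>m. Option.bind (bind A f m) (\<lambda>m'.
       wadd A (wscale A (esem A e \<sigma>) m') (wscale A (esem A e' \<sigma>) (eta A \<sigma>)))))"

fun Phi_iter :: "'u psemiring \<Rightarrow> ('s, 'u) prog \<Rightarrow> ('s, 'u) expr \<Rightarrow> ('s, 'u) expr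
                 \<Rightarrow> nat \<Rightarrow> ('s \<Rightarrow> 's \<Rightarrow> 'u) option" where
  "Phi_iter A C e e' 0 = Some (\<lambda>_. wzero A)"
| "Phi_iter A C e e' (Suc n) = Option.bind (Phi_iter A C e e' n) (Phi A C e e')"

definition sem_sum :: "'u psemiring \<Rightarrow> ('s, 'u) prog list \<Rightarrow> ('s \<Rightarrow> 's \<Rightarrow> 'u) option" where
  "sem_sum A Ps = lift_kernel (\<lambda>\<sigma>. Option.bind (those (map (\<lambda>P. sem A P \<sigma>) Ps)) (wsum A))"

end

theory Submission imports Defs begin

definition oadd :: "'u psemiring \<Rightarrow> 'u option \<Rightarrow> 'u option \<Rightarrow> 'u option" where
  "oadd A x y = (case x of None \<Rightarrow> None | Some a \<Rightarrow> (case y of None \<Rightarrow> None | Some b \<Rightarrow> padd A a b))"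

lemma oadd_simps[simp]: "oadd A None y = None" "oadd A x None = None"
  "oadd A (Some a) (Some b) = padd A a b"
  by (auto simp: oadd_def split: option.splits)

lemma oadd_SomeE: "oadd A (Some a) y = Some s \<Longrightarrow> \<exists>b. y = Some b \<and> padd A a b = Some s"
  by (cases y) auto

lemma oadd_Some: "oadd A x y = Some s \<Longrightarrow> \<exists>a b. x = Some a \<and> y = Some b \<and> padd A a b = Some s"
  by (cases x; cases y; auto)

definition bv :: "'u psemiring \<Rightarrow> ('s \<Rightarrow> 's \<Rightarrow> 'u) \<Rightarrow> ('s \<Rightarrow> 'u) \<Rightarrow> 's \<Rightarrow> 'u" where
  "bv A f m = (\<lambda>\<tau>. the (psum A (\<lambda>\<sigma>. pmul A (m \<sigma>) (f \<sigma> \<tau>)) (supp A m)))"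

definition Ksem :: "'u psemiring \<Rightarrow> ('s, 'u) prog \<Rightarrow> 's \<Rightarrow> 's \<Rightarrow> 'u" where
  "Ksem A P = (\<lambda>\<sigma>. the (sem A P \<sigma>))"

definition Pk :: "'u psemiring \<Rightarrow> ('s, 'u) prog \<Rightarrow> ('s, 'u) expr \<Rightarrow> ('s, 'u) expr \<Rightarrow> nat \<Rightarrow> 's \<Rightarrow> 's \<Rightarrow> 'u" where
  "Pk A C e e' k = Ksem A (Seq (ppow (Seq (Assume e) C) k) (Assume e'))"

definition U :: "'u psemiring \<Rightarrow> ('s, 'u) prog \<Rightarrow> ('s, 'u) expr \<Rightarrow> ('s, 'u) expr \<Rightarrow> nat \<Rightarrow> 's \<Rightarrow> 's \<Rightarrow> 'u option" where
  "U A C e e' n \<sigma> \<tau> = comm_monoid_set.F (oadd A) (Some (pzero A)) (\<lambda>k. Some (Pk A C e e' k \<sigma> \<tau>)) {..<n}"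

definition R :: "'u psemiring \<Rightarrow> ('s, 'u) prog \<Rightarrow> ('s, 'u) expr \<Rightarrow> ('s, 'u) expr \<Rightarrow> nat \<Rightarrow> ('s \<Rightarrow> 's \<Rightarrow> 'u) option" where
  "R A C e e' n = lift_kernel (\<lambda>\<sigma>. if (\<forall>\<tau>. U A C e e' n \<sigma> \<tau> \<noteq> None) \<and> inW A (\<lambda>\<tau>. the (U A C e e' n \<sigma> \<tau>))
       then Some (\<lambda>\<tau>. the (U A C e e' n \<sigma> \<tau>)) else None)"

definition LS :: "'u psemiring \<Rightarrow> ('s \<Rightarrow> 'u) list \<Rightarrow> 's \<Rightarrow> 'u option" where
  "LS A ms \<tau> = foldr (\<lambda>m acc. oadd A (Some (m \<tau>)) acc) ms (Some (pzero A))"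

locale gs =
  fixes A :: "'u psemiring"
  assumes good: "good_semiring A"
begin

lemma PS: "partial_semiring A" using good by (simp add: good_semiring_def)

lemma add_comm: "padd A a b = padd A b a" using PS by (simp add: partial_semiring_def)
lemma add_assoc: "Option.bind (padd A a b) (\<lambda>x. padd A x c) = Option.bind (padd A b c) (\<lambda>y. padd A a y)"
  using PS unfolding partial_semiring_def by blast
lemma add_zero[simp]: "padd A a (pzero A) = Some a" using PS by (simp add: partial_semiring_def)
lemma zero_add[simp]: "padd A (pzero A) a = Some a" using add_comm add_zero by metis
lemma mul_assoc: "pmul A (pmul A a b) c = pmul A a (pmul A b c)" using PS by (simp add: partial_semiring_def)
lemma mul_one[simp]: "pmul A (pone A) a = a" "pmul A a (pone A) = a" using PS by (simp_all add: partial_semiring_def)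
lemma mul_zero[simp]: "pmul A (pzero A) a = pzero A" "pmul A a (pzero A) = pzero A" using PS by (simp_all add: partial_semiring_def)
lemma distl: "padd A b c = Some d \<Longrightarrow> padd A (pmul A a b) (pmul A a c) = Some (pmul A a d)"
  using PS unfolding partial_semiring_def by blast
lemma distr: "padd A b c = Some d \<Longrightarrow> padd A (pmul A b a) (pmul A c a) = Some (pmul A d a)"
  using PS unfolding partial_semiring_def by blast
lemma antisym: "nle A a b \<Longrightarrow> nle A b a \<Longrightarrow> a = b"
  using good unfolding good_semiring_def naturally_ordered_def by blast
lemma scott_lub: "directed A D \<Longrightarrow> \<exists>u. is_lub A D u"
  using good unfolding good_semiring_def scott_continuous_def by blast
lemma scott_mul: "directed A D \<Longrightarrow> is_lub A D u \<Longrightarrow>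
   is_lub A (pmul A a ` D) (pmul A a u) \<and> is_lub A ((\<lambda>d. pmul A d a) ` D) (pmul A u a)"
  using good unfolding good_semiring_def scott_continuous_def by blast
lemma scott_add: "directed A D \<Longrightarrow> is_lub A D u \<Longrightarrow> (\<forall>d\<in>D. padd A d b \<noteq> None) \<Longrightarrow>
        (\<exists>s. padd A u b = Some s \<and> is_lub A ((\<lambda>d. the (padd A d b)) ` D) s)"
  using good unfolding good_semiring_def scott_continuous_def by blast
lemma top: "\<exists>t. \<forall>a. nle A a t"
  using good unfolding good_semiring_def has_top_def by blast

sublocale os: comm_monoid_set "oadd A" "Some (pzero A)"
proof
  fix a b c :: "'u option"
  show "oadd A (oadd A a b) c = oadd A a (oadd A b c)"
  proof -
    have "oadd A (oadd A (Some x) (Some y)) (Some z) = oadd A (Some x) (oadd A (Some y) (Some z))" for x y z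
      using add_assoc[of x y z] by (cases "padd A x y"; cases "padd A y z"; simp)
    then show ?thesis by (cases a; cases b; cases c; simp only: oadd_simps(1) oadd_simps(2))
  qed
  show "oadd A a b = oadd A b a" using add_comm by (cases a; cases b; auto)
  show "oadd A a (Some (pzero A)) = a" by (cases a; auto)
qed

lemma nle_refl[simp]: "nle A a a" unfolding nle_def using add_zero by blast
lemma add_le: "padd A a b = Some s \<Longrightarrow> nle A a s" unfolding nle_def by blast
lemma add_le2: "padd A a b = Some s \<Longrightarrow> nle A b s" unfolding nle_def using add_comm by metis
lemma zero_le[simp]: "nle A (pzero A) a" unfolding nle_def by auto
lemma le_zero: "nle A a (pzero A) \<Longrightarrow> a = pzero A" using antisym zero_le by blast

lemma nle_trans: "nle A a b \<Longrightarrow> nle A b c \<Longrightarrow> nle A a c"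
proof -
  assume "nle A a b" "nle A b c"
  then obtain d1 d2 where 1: "padd A a d1 = Some b" and 2: "padd A b d2 = Some c" unfolding nle_def by blast
  have "oadd A (oadd A (Some a) (Some d1)) (Some d2) = Some c" using 1 2 by (simp del: oadd_simps add: oadd_def)
  then have "oadd A (Some a) (oadd A (Some d1) (Some d2)) = Some c" by (simp only: os.assoc)
  then show ?thesis unfolding nle_def by (metis oadd_Some oadd_simps(3))
qed

lemma add_mono: "nle A a b \<Longrightarrow> padd A b c = Some s \<Longrightarrow> \<exists>s'. padd A a c = Some s' \<and> nle A s' s"
proof -
  assume "nle A a b" and bc: "padd A b c = Some s"
  then obtain d where ad: "padd A a d = Some b" unfolding nle_def by blast
  have "oadd A (oadd A (Some a) (Some d)) (Some c) = Some s" using ad bc by (simp del: oadd_simps add: oadd_def)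
  then have "oadd A (oadd A (Some a) (Some c)) (Some d) = Some s" by (metis os.assoc os.commute)
  then show ?thesis by (metis oadd_Some oadd_simps(3) add_le)
qed

lemma add_mono2: "nle A a a' \<Longrightarrow> nle A b b' \<Longrightarrow> padd A a' b' = Some t \<Longrightarrow> \<exists>s. padd A a b = Some s \<and> nle A s t"
proof -
  assume 1: "nle A a a'" and 2: "nle A b b'" and 3: "padd A a' b' = Some t"
  obtain s1 where s1: "padd A a b' = Some s1" "nle A s1 t" using add_mono[OF 1 3] by blast
  have "padd A b' a = Some s1" using s1 add_comm by metis
  then obtain s2 where "padd A b a = Some s2" "nle A s2 s1" using add_mono[OF 2] by blast
  then show ?thesis using s1 add_comm nle_trans by metis
qed

lemma mul_mono_l: "nle A a b \<Longrightarrow> nle A (pmul A c a) (pmul A c b)"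
  unfolding nle_def using distl by blast
lemma mul_mono_r: "nle A a b \<Longrightarrow> nle A (pmul A a c) (pmul A b c)"
  unfolding nle_def using distr by blast

lemma lub_unique: "is_lub A D u \<Longrightarrow> is_lub A D v \<Longrightarrow> u = v"
  unfolding is_lub_def using antisym by blast

lemma trivial: "pone A = pzero A \<Longrightarrow> a = pzero A"
  by (metis mul_one(2) mul_zero(2))


abbreviation fs :: "('a \<Rightarrow> 'u) \<Rightarrow> 'a set \<Rightarrow> 'u option" where
  "fs f F \<equiv> os.F (\<lambda>x. Some (f x)) F"

lemma fs_mono:
  assumes "finite F" "\<forall>x\<in>F. nle A (f x) (g x)" "fs g F = Some t"
  shows "\<exists>s. fs f F = Some s \<and> nle A s t"
  using assms
proof (induction F arbitrary: t rule: finite_induct)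
  case empty
  then show ?case by simp
next
  case (insert x F)
  have "oadd A (Some (g x)) (fs g F) = Some t" using insert.prems(2) unfolding os.insert[OF insert.hyps(1,2)] .
  from oadd_SomeE[OF this] obtain t' where t': "fs g F = Some t'" "padd A (g x) t' = Some t" by blast
  have "\<forall>x\<in>F. nle A (f x) (g x)" using insert.prems(1) by blast
  from insert.IH[OF this t'(1)] obtain s' where s': "fs f F = Some s'" "nle A s' t'" by blast
  have "nle A (f x) (g x)" using insert.prems(1) by blast
  from add_mono2[OF this s'(2) t'(2)] obtain s where "padd A (f x) s' = Some s" "nle A s t" by blast
  then show ?case unfolding os.insert[OF insert.hyps(1,2)] using s' by simp
qed

lemma fs_subset:
  assumes "finite F" "G \<subseteq> F" "fs f F = Some t"
  shows "\<exists>s. fs f G = Some s \<and> nle A s t"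
proof -
  have "oadd A (fs f (F - G)) (fs f G) = Some t" using os.subset_diff[OF assms(2,1)] assms(3) by simp
  from oadd_Some[OF this] obtain a b where "fs f (F - G) = Some a" "fs f G = Some b" "padd A a b = Some t"
    by blast
  then show ?thesis using add_le2 by blast
qed

lemma fs_distl:
  assumes "finite F" "fs f F = Some s"
  shows "fs (\<lambda>x. pmul A c (f x)) F = Some (pmul A c s)"
  using assms
proof (induction F arbitrary: s rule: finite_induct)
  case empty then show ?case by (simp, metis mul_zero)
next
  case (insert x F)
  have "oadd A (Some (f x)) (fs f F) = Some s" using insert.prems unfolding os.insert[OF insert.hyps(1,2)] .
  from oadd_SomeE[OF this] obtain s' where "fs f F = Some s'" "padd A (f x) s' = Some s" by blast
  then show ?case using insert distl by simp
qed

lemma fs_distr: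
  assumes "finite F" "fs f F = Some s"
  shows "fs (\<lambda>x. pmul A (f x) c) F = Some (pmul A s c)"
  using assms
proof (induction F arbitrary: s rule: finite_induct)
  case empty then show ?case by (simp, metis mul_zero)
next
  case (insert x F)
  have "oadd A (Some (f x)) (fs f F) = Some s" using insert.prems unfolding os.insert[OF insert.hyps(1,2)] .
  from oadd_SomeE[OF this] obtain s' where "fs f F = Some s'" "padd A (f x) s' = Some s" by blast
  then show ?case using insert distr by simp
qed

lemma fsum_rel_iff: "fsum_rel A f F s \<longleftrightarrow> finite F \<and> fs f F = Some s"
proof
  assume "fsum_rel A f F s"
  then show "finite F \<and> fs f F = Some s"
  proof (induction rule: fsum_rel.induct)
    case empty then show ?case by simp
  next
    case (insert F x s s')
    have "padd A (f x) s = Some s'" using insert.hyps(4) add_comm by metis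
    then show ?case using insert os.insert[OF insert.hyps(1,2)] by simp
  qed
next
  assume "finite F \<and> fs f F = Some s"
  then have "finite F" "fs f F = Some s" by auto
  then show "fsum_rel A f F s"
  proof (induction F arbitrary: s rule: finite_induct)
    case empty then show ?case by (simp, metis fsum_rel.empty)
  next
    case (insert x F)
    have "oadd A (Some (f x)) (fs f F) = Some s" using insert.prems unfolding os.insert[OF insert.hyps(1,2)] .
  from oadd_SomeE[OF this] obtain s' where "fs f F = Some s'" "padd A (f x) s' = Some s" by blast
    have "padd A s' (f x) = Some s" using \<open>padd A (f x) s' = Some s\<close> add_comm by metis
    then show ?case using fsum_rel.insert[OF insert.hyps(1,2) insert.IH[OF \<open>fs f F = Some s'\<close>]] by blast
  qed
qed

definition PSs :: "('a \<Rightarrow> 'u) \<Rightarrow> 'a set \<Rightarrow> 'u set" where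
  "PSs f S = {s. \<exists>F. finite F \<and> F \<subseteq> S \<and> fs f F = Some s}"

lemma has_psum_iff: "has_psum A f S u \<longleftrightarrow> (\<forall>F. finite F \<and> F \<subseteq> S \<longrightarrow> fs f F \<noteq> None) \<and> is_lub A (PSs f S) u"
proof -
  have 1: "{s. \<exists>F. finite F \<and> F \<subseteq> S \<and> fsum_rel A f F s} = PSs f S" unfolding PSs_def fsum_rel_iff by blast
  have 2: "(\<forall>F. finite F \<and> F \<subseteq> S \<longrightarrow> (\<exists>s. fsum_rel A f F s)) \<longleftrightarrow> (\<forall>F. finite F \<and> F \<subseteq> S \<longrightarrow> fs f F \<noteq> None)"
    unfolding fsum_rel_iff by simp
  show ?thesis unfolding has_psum_def 1 2 ..
qed

lemma PSs_I: "finite F \<Longrightarrow> F \<subseteq> S \<Longrightarrow> fs f F = Some s \<Longrightarrow> s \<in> PSs f S"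
  unfolding PSs_def by auto

lemma PSs_E: "s \<in> PSs f S \<Longrightarrow> (\<And>F. finite F \<Longrightarrow> F \<subseteq> S \<Longrightarrow> fs f F = Some s \<Longrightarrow> P) \<Longrightarrow> P"
  unfolding PSs_def by auto

lemma lubD1: "is_lub A D u \<Longrightarrow> s \<in> D \<Longrightarrow> nle A s u"
  unfolding is_lub_def by auto

lemma lubD2: "is_lub A D u \<Longrightarrow> (\<And>s. s \<in> D \<Longrightarrow> nle A s v) \<Longrightarrow> nle A u v"
  unfolding is_lub_def by auto

lemma lubI: "(\<And>s. s \<in> D \<Longrightarrow> nle A s u) \<Longrightarrow> (\<And>v. (\<And>s. s \<in> D \<Longrightarrow> nle A s v) \<Longrightarrow> nle A u v) \<Longrightarrow> is_lub A D u"
  unfolding is_lub_def by auto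

lemma PSs_directed:
  assumes "\<forall>F. finite F \<and> F \<subseteq> S \<longrightarrow> fs f F \<noteq> None"
  shows "directed A (PSs f S)"
  unfolding directed_def
proof (intro conjI ballI)
  have "pzero A \<in> PSs f S" by (rule PSs_I[of "{}"]) auto
  then show "PSs f S \<noteq> {}" by auto
next
  fix x y assume x: "x \<in> PSs f S" and y: "y \<in> PSs f S"
  from x obtain F where F: "finite F" "F \<subseteq> S" "fs f F = Some x" by (rule PSs_E)
  from y obtain G where G: "finite G" "G \<subseteq> S" "fs f G = Some y" by (rule PSs_E)
  have fu: "finite (F \<union> G)" "F \<union> G \<subseteq> S" using F G by auto
  have "fs f (F \<union> G) \<noteq> None" using assms fu by simp
  then obtain z where z: "fs f (F \<union> G) = Some z" by auto
  have "nle A x z" using fs_subset[OF fu(1) _ z, of F] F(3) by auto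
  moreover have "nle A y z" using fs_subset[OF fu(1) _ z, of G] G(3) by auto
  moreover have "z \<in> PSs f S" by (rule PSs_I[OF fu z])
  ultimately show "\<exists>z\<in>PSs f S. nle A x z \<and> nle A y z" by auto
qed

lemma hp_le:
  assumes h: "has_psum A f S u" and fin: "finite F" and sub: "F \<subseteq> S"
  shows "\<exists>s. fs f F = Some s \<and> nle A s u"
proof -
  have d: "fs f F \<noteq> None" and l: "is_lub A (PSs f S) u" using h fin sub unfolding has_psum_iff by auto
  then obtain s where s: "fs f F = Some s" by auto
  have "s \<in> PSs f S" by (rule PSs_I[OF fin sub s])
  then show ?thesis using s lubD1[OF l] by auto
qed

lemma hp_least:
  assumes h: "has_psum A f S u" and H: "\<And>F s. finite F \<Longrightarrow> F \<subseteq> S \<Longrightarrow> fs f F = Some s \<Longrightarrow> nle A s v"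
  shows "nle A u v"
proof -
  have l: "is_lub A (PSs f S) u" using h unfolding has_psum_iff by auto
  show ?thesis
  proof (rule lubD2[OF l])
    fix s assume "s \<in> PSs f S"
    then show "nle A s v" by (rule PSs_E) (rule H)
  qed
qed

lemma hp_intro:
  assumes H1: "\<And>F. finite F \<Longrightarrow> F \<subseteq> S \<Longrightarrow> \<exists>s. fs f F = Some s \<and> nle A s u"
    and H2: "\<And>v. (\<And>F s. finite F \<Longrightarrow> F \<subseteq> S \<Longrightarrow> fs f F = Some s \<Longrightarrow> nle A s v) \<Longrightarrow> nle A u v"
  shows "has_psum A f S u"
  unfolding has_psum_iff
proof (intro conjI allI impI lubI)
  fix F assume "finite F \<and> F \<subseteq> S" then show "fs f F \<noteq> None" using H1[of F] by auto
next
  fix s assume "s \<in> PSs f S"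
  then show "nle A s u"
  proof (rule PSs_E)
    fix F assume "finite F" "F \<subseteq> S" "fs f F = Some s"
    then show "nle A s u" using H1[of F] by auto
  qed
next
  fix v assume v: "\<And>s. s \<in> PSs f S \<Longrightarrow> nle A s v"
  show "nle A u v"
  proof (rule H2)
    fix F s assume "finite F" "F \<subseteq> S" "fs f F = Some s"
    then have "s \<in> PSs f S" by (rule PSs_I)
    then show "nle A s v" by (rule v)
  qed
qed

lemma hp_exists:
  assumes H: "\<And>F. finite F \<Longrightarrow> F \<subseteq> S \<Longrightarrow> \<exists>s. fs f F = Some s \<and> nle A s v"
  shows "\<exists>u. has_psum A f S u \<and> nle A u v"
proof -
  have def: "\<forall>F. finite F \<and> F \<subseteq> S \<longrightarrow> fs f F \<noteq> None"
  proof (intro allI impI)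
    fix F assume "finite F \<and> F \<subseteq> S" then show "fs f F \<noteq> None" using H[of F] by auto
  qed
  obtain u where u: "is_lub A (PSs f S) u" using scott_lub[OF PSs_directed[OF def]] by auto
  have "nle A u v"
  proof (rule lubD2[OF u])
    fix s assume "s \<in> PSs f S"
    then show "nle A s v"
    proof (rule PSs_E)
      fix F assume "finite F" "F \<subseteq> S" "fs f F = Some s"
      then show "nle A s v" using H[of F] by auto
    qed
  qed
  then show ?thesis using u def unfolding has_psum_iff by auto
qed

lemma hp_unique: "has_psum A f S u \<Longrightarrow> has_psum A f S v \<Longrightarrow> u = v"
proof -
  assume "has_psum A f S u" "has_psum A f S v"
  then have "is_lub A (PSs f S) u" "is_lub A (PSs f S) v" unfolding has_psum_iff by auto
  then show "u = v" by (rule lub_unique)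
qed

lemma psum_eq: "has_psum A f S u \<Longrightarrow> psum A f S = Some u"
proof -
  assume h: "has_psum A f S u"
  have "(THE u. has_psum A f S u) = u" using h hp_unique by (intro the_equality) auto
  then show ?thesis using h unfolding psum_def by auto
qed

lemma psum_SomeD: "psum A f S = Some u \<Longrightarrow> has_psum A f S u"
proof -
  assume p: "psum A f S = Some u"
  have "\<exists>u. has_psum A f S u" using p unfolding psum_def by (auto split: if_splits)
  then obtain w where w: "has_psum A f S w" by auto
  then have "psum A f S = Some w" by (rule psum_eq)
  then show ?thesis using p w by simp
qed

lemma PSs_eq:
  assumes H1: "\<And>F. finite F \<Longrightarrow> F \<subseteq> S \<Longrightarrow> \<exists>G. finite G \<and> G \<subseteq> T \<and> fs f F = fs g G"
    and H2: "\<And>G. finite G \<Longrightarrow> G \<subseteq> T \<Longrightarrow> \<exists>F. finite F \<and> F \<subseteq> S \<and> fs f F = fs g G"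
  shows "has_psum A f S u \<longleftrightarrow> has_psum A g T u"
proof -
  have P: "PSs f S = PSs g T"
  proof (intro set_eqI iffI)
    fix s assume "s \<in> PSs f S"
    then show "s \<in> PSs g T"
    proof (rule PSs_E)
      fix F assume F: "finite F" "F \<subseteq> S" "fs f F = Some s"
      obtain G where G: "finite G" "G \<subseteq> T" "fs f F = fs g G" using H1[OF F(1,2)] by auto
      have "fs g G = Some s" using F(3) G(3) by simp
      then show "s \<in> PSs g T" by (rule PSs_I[OF G(1,2)])
    qed
  next
    fix s assume "s \<in> PSs g T"
    then show "s \<in> PSs f S"
    proof (rule PSs_E)
      fix G assume G: "finite G" "G \<subseteq> T" "fs g G = Some s"
      obtain F where F: "finite F" "F \<subseteq> S" "fs f F = fs g G" using H2[OF G(1,2)] by auto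
      have "fs f F = Some s" using F(3) G(3) by simp
      then show "s \<in> PSs f S" by (rule PSs_I[OF F(1,2)])
    qed
  qed
  have D: "(\<forall>F. finite F \<and> F \<subseteq> S \<longrightarrow> fs f F \<noteq> None) \<longleftrightarrow> (\<forall>G. finite G \<and> G \<subseteq> T \<longrightarrow> fs g G \<noteq> None)"
  proof (intro iffI allI impI)
    fix G assume a: "\<forall>F. finite F \<and> F \<subseteq> S \<longrightarrow> fs f F \<noteq> None" and G: "finite G \<and> G \<subseteq> T"
    obtain F where F: "finite F" "F \<subseteq> S" "fs f F = fs g G" using H2[of G] G by auto
    show "fs g G \<noteq> None" using a F by auto
  next
    fix F assume a: "\<forall>G. finite G \<and> G \<subseteq> T \<longrightarrow> fs g G \<noteq> None" and F: "finite F \<and> F \<subseteq> S"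
    obtain G where G: "finite G" "G \<subseteq> T" "fs f F = fs g G" using H1[of F] F by auto
    show "fs f F \<noteq> None" using a G by auto
  qed
  show ?thesis unfolding has_psum_iff P D ..
qed

lemma hp_cong: "(\<And>x. x \<in> S \<Longrightarrow> f x = g x) \<Longrightarrow> has_psum A f S u \<Longrightarrow> has_psum A g S u"
proof -
  assume eq: "\<And>x. x \<in> S \<Longrightarrow> f x = g x" and h: "has_psum A f S u"
  have e: "fs f F = fs g F" if "F \<subseteq> S" for F
    by (rule os.cong) (use eq that in auto)
  have "has_psum A f S u \<longleftrightarrow> has_psum A g S u"
    by (rule PSs_eq) (use e in auto)
  then show ?thesis using h by simp
qed

lemma zero_cong_aux:
  assumes "S \<inter> {x. f x \<noteq> pzero A} \<subseteq> T" "finite F" "F \<subseteq> S"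
  shows "\<exists>G. finite G \<and> G \<subseteq> T \<and> fs f F = fs f G"
proof -
  have "fs f F = fs f (F \<inter> {x. f x \<noteq> pzero A})"
    by (rule os.mono_neutral_right) (use assms in auto)
  moreover have "F \<inter> {x. f x \<noteq> pzero A} \<subseteq> T" using assms by auto
  moreover have "finite (F \<inter> {x. f x \<noteq> pzero A})" using assms by auto
  ultimately show ?thesis by auto
qed

lemma hp_zero_cong:
  assumes "S \<inter> {x. f x \<noteq> pzero A} = T \<inter> {x. f x \<noteq> pzero A}"
  shows "has_psum A f S u \<longleftrightarrow> has_psum A f T u"
proof (rule PSs_eq)
  have a: "S \<inter> {x. f x \<noteq> pzero A} \<subseteq> T" "T \<inter> {x. f x \<noteq> pzero A} \<subseteq> S" using assms by auto
  fix F assume "finite F" "F \<subseteq> S"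
  then show "\<exists>G. finite G \<and> G \<subseteq> T \<and> fs f F = fs f G" by (rule zero_cong_aux[OF a(1)])
next
  have a: "S \<inter> {x. f x \<noteq> pzero A} \<subseteq> T" "T \<inter> {x. f x \<noteq> pzero A} \<subseteq> S" using assms by auto
  fix G assume "finite G" "G \<subseteq> T"
  from zero_cong_aux[OF a(2) this] show "\<exists>F. finite F \<and> F \<subseteq> S \<and> fs f F = fs f G" by auto
qed

lemma hp_finite: "finite S \<Longrightarrow> has_psum A f S u \<longleftrightarrow> fs f S = Some u"
proof
  assume S: "finite S" and h: "has_psum A f S u"
  obtain s where s: "fs f S = Some s" "nle A s u" using hp_le[OF h S] by auto
  have "nle A u s"
  proof (rule hp_least[OF h])
    fix F s' assume "finite F" "F \<subseteq> S" "fs f F = Some s'"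
    then show "nle A s' s" using fs_subset[OF S \<open>F \<subseteq> S\<close> s(1)] by auto
  qed
  then show "fs f S = Some u" using s antisym by simp
next
  assume S: "finite S" and s: "fs f S = Some u"
  show "has_psum A f S u"
  proof (rule hp_intro)
    fix F assume "finite F" "F \<subseteq> S"
    then show "\<exists>s. fs f F = Some s \<and> nle A s u" using fs_subset[OF S _ s] by auto
  next
    fix v assume "\<And>F s. finite F \<Longrightarrow> F \<subseteq> S \<Longrightarrow> fs f F = Some s \<Longrightarrow> nle A s v"
    then show "nle A u v" using S s by auto
  qed
qed

lemma hp_all_zero: "(\<And>x. x \<in> S \<Longrightarrow> f x = pzero A) \<Longrightarrow> has_psum A f S (pzero A)"
proof -
  assume z: "\<And>x. x \<in> S \<Longrightarrow> f x = pzero A"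
  have "has_psum A f {} (pzero A)" using hp_finite[of "{}" f] by simp
  moreover have "S \<inter> {x. f x \<noteq> pzero A} = {} \<inter> {x. f x \<noteq> pzero A}" using z by auto
  ultimately show ?thesis using hp_zero_cong[of S f "{}"] by simp
qed

lemma hp_single: "has_psum A f {x} (f x)"
  using hp_finite[of "{x}" f] by simp

lemma hp_def: "has_psum A f S u \<Longrightarrow> \<forall>F. finite F \<and> F \<subseteq> S \<longrightarrow> fs f F \<noteq> None"
  unfolding has_psum_iff by auto

lemma hp_lub: "has_psum A f S u \<Longrightarrow> is_lub A (PSs f S) u"
  unfolding has_psum_iff by auto

lemma hp_scale_l:
  assumes h: "has_psum A f S u"
  shows "has_psum A (\<lambda>x. pmul A c (f x)) S (pmul A c u)"
proof -
  have def: "\<forall>F. finite F \<and> F \<subseteq> S \<longrightarrow> fs f F \<noteq> None" using hp_def[OF h] .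
  have lub: "is_lub A (PSs f S) u" using hp_lub[OF h] .
  have def2: "\<forall>F. finite F \<and> F \<subseteq> S \<longrightarrow> fs (\<lambda>x. pmul A c (f x)) F \<noteq> None"
  proof (intro allI impI)
    fix F assume F: "finite F \<and> F \<subseteq> S"
    then obtain t where "fs f F = Some t" using def by auto
    then show "fs (\<lambda>x. pmul A c (f x)) F \<noteq> None" using fs_distl[of F f t c] F by auto
  qed
  have "PSs (\<lambda>x. pmul A c (f x)) S = pmul A c ` PSs f S"
  proof (intro set_eqI iffI)
    fix s assume "s \<in> PSs (\<lambda>x. pmul A c (f x)) S"
    then show "s \<in> pmul A c ` PSs f S"
    proof (rule PSs_E)
      fix F assume F: "finite F" "F \<subseteq> S" "fs (\<lambda>x. pmul A c (f x)) F = Some s"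
      obtain t where t: "fs f F = Some t" using def F by auto
      have "s = pmul A c t" using fs_distl[OF F(1) t] F(3) by simp
      moreover have "t \<in> PSs f S" by (rule PSs_I[OF F(1,2) t])
      ultimately show ?thesis by auto
    qed
  next
    fix s assume "s \<in> pmul A c ` PSs f S"
    then obtain t where s: "s = pmul A c t" and t: "t \<in> PSs f S" by auto
    from t show "s \<in> PSs (\<lambda>x. pmul A c (f x)) S"
    proof (rule PSs_E)
      fix F assume F: "finite F" "F \<subseteq> S" "fs f F = Some t"
      show ?thesis using PSs_I[OF F(1,2) fs_distl[OF F(1,3)]] s by simp
    qed
  qed
  then show ?thesis using scott_mul[OF PSs_directed[OF def] lub] def2 unfolding has_psum_iff by auto
qed

lemma hp_scale_r:
  assumes h: "has_psum A f S u"
  shows "has_psum A (\<lambda>x. pmul A (f x) c) S (pmul A u c)"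
proof -
  have def: "\<forall>F. finite F \<and> F \<subseteq> S \<longrightarrow> fs f F \<noteq> None" using hp_def[OF h] .
  have lub: "is_lub A (PSs f S) u" using hp_lub[OF h] .
  have def2: "\<forall>F. finite F \<and> F \<subseteq> S \<longrightarrow> fs (\<lambda>x. pmul A (f x) c) F \<noteq> None"
  proof (intro allI impI)
    fix F assume F: "finite F \<and> F \<subseteq> S"
    then obtain t where "fs f F = Some t" using def by auto
    then show "fs (\<lambda>x. pmul A (f x) c) F \<noteq> None" using fs_distr[of F f t c] F by auto
  qed
  have "PSs (\<lambda>x. pmul A (f x) c) S = (\<lambda>d. pmul A d c) ` PSs f S"
  proof (intro set_eqI iffI)
    fix s assume "s \<in> PSs (\<lambda>x. pmul A (f x) c) S"
    then show "s \<in> (\<lambda>d. pmul A d c) ` PSs f S"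
    proof (rule PSs_E)
      fix F assume F: "finite F" "F \<subseteq> S" "fs (\<lambda>x. pmul A (f x) c) F = Some s"
      obtain t where t: "fs f F = Some t" using def F by auto
      have "s = pmul A t c" using fs_distr[OF F(1) t] F(3) by simp
      moreover have "t \<in> PSs f S" by (rule PSs_I[OF F(1,2) t])
      ultimately show ?thesis by auto
    qed
  next
    fix s assume "s \<in> (\<lambda>d. pmul A d c) ` PSs f S"
    then obtain t where s: "s = pmul A t c" and t: "t \<in> PSs f S" by auto
    from t show "s \<in> PSs (\<lambda>x. pmul A (f x) c) S"
    proof (rule PSs_E)
      fix F assume F: "finite F" "F \<subseteq> S" "fs f F = Some t"
      show ?thesis using PSs_I[OF F(1,2) fs_distr[OF F(1,3)]] s by simp
    qed
  qed
  then show ?thesis using scott_mul[OF PSs_directed[OF def] lub] def2 unfolding has_psum_iff by auto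
qed

lemma hp_dom:
  assumes "\<And>x. x \<in> S \<Longrightarrow> nle A (g x) (h x)" "has_psum A h S H"
  shows "\<exists>u. has_psum A g S u \<and> nle A u H"
proof (rule hp_exists)
  fix F assume F: "finite F" "F \<subseteq> S"
  obtain t where t: "fs h F = Some t" "nle A t H" using hp_le[OF assms(2) F] by auto
  have "\<forall>x\<in>F. nle A (g x) (h x)" using assms(1) F by auto
  from fs_mono[OF F(1) this t(1)] obtain s where "fs g F = Some s" "nle A s t" by auto
  then show "\<exists>s. fs g F = Some s \<and> nle A s H" using t nle_trans by auto
qed

lemma hp_bij:
  assumes b: "bij_betw h T' T" and hs: "has_psum A f T u"
  shows "has_psum A (\<lambda>x. f (h x)) T' u"
proof -
  have inj: "inj_on h T'" using b bij_betw_def by auto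
  have "has_psum A (\<lambda>x. f (h x)) T' u \<longleftrightarrow> has_psum A f T u"
  proof (rule PSs_eq)
    fix F assume F: "finite F" "F \<subseteq> T'"
    have iF: "inj_on h F" using inj_on_subset[OF inj F(2)] .
    have "fs f (h ` F) = fs (\<lambda>x. f (h x)) F"
      using os.reindex[OF iF, of "\<lambda>x. Some (f x)"] by (simp add: comp_def)
    moreover have "h ` F \<subseteq> T" using F b unfolding bij_betw_def by auto
    moreover have "finite (h ` F)" using F by auto
    ultimately show "\<exists>G. finite G \<and> G \<subseteq> T \<and> fs (\<lambda>x. f (h x)) F = fs f G" by metis
  next
    fix G assume G: "finite G" "G \<subseteq> T"
    define F where "F = T' \<inter> h -` G"
    have hF: "h ` F = G" using b G unfolding F_def bij_betw_def by auto
    have iF: "inj_on h F" using inj_on_subset[OF inj] F_def by auto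
    have fin: "finite F" using hF iF G(1) finite_imageD by auto
    have "fs f (h ` F) = fs (\<lambda>x. f (h x)) F"
      using os.reindex[OF iF, of "\<lambda>x. Some (f x)"] by (simp add: comp_def)
    then show "\<exists>F. finite F \<and> F \<subseteq> T' \<and> fs (\<lambda>x. f (h x)) F = fs f G"
      using hF fin F_def by (intro exI[of _ F]) auto
  qed
  then show ?thesis using hs by simp
qed

lemma hp_swap:
  assumes "has_psum A (\<lambda>(i,j). a i j) (I \<times> J) S"
  shows "has_psum A (\<lambda>(j,i). a i j) (J \<times> I) S"
proof -
  have "bij_betw (\<lambda>(j,i). (i,j)) (J \<times> I) (I \<times> J)"
    by (rule bij_betw_byWitness[of _ "\<lambda>(i,j). (j,i)"]) auto
  from hp_bij[OF this assms] show ?thesis by (simp add: case_prod_beta')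
qed


lemma oadd_zero_left[simp]: "oadd A (Some (pzero A)) y = y"
  by (cases y) auto

lemma oadd_zero_right[simp]: "oadd A y (Some (pzero A)) = y"
  by (cases y) auto

lemma lub_sum:
  assumes "finite G"
    and "\<And>i. i \<in> G \<Longrightarrow> directed A (D i) \<and> is_lub A (D i) (u i)"
    and "\<And>d. (\<And>i. i \<in> G \<Longrightarrow> d i \<in> D i) \<Longrightarrow> \<exists>x. oadd A (Some b) (fs d G) = Some x \<and> nle A x v"
  shows "\<exists>x. oadd A (Some b) (fs u G) = Some x \<and> nle A x v"
  using assms
proof (induction G arbitrary: b rule: finite_induct)
  case empty
  show ?case using empty.prems(2)[of u] by simp
next
  case (insert i G)
  have di: "directed A (D i)" "is_lub A (D i) (u i)" using insert.prems(1)[of i] by auto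
  define d0 where "d0 = (\<lambda>j. SOME x. x \<in> D j)"
  have d0: "d0 j \<in> D j" if "j \<in> insert i G" for j
  proof -
    have "D j \<noteq> {}" using insert.prems(1)[OF that] unfolding directed_def by auto
    then show ?thesis unfolding d0_def by (auto intro: someI_ex)
  qed
  have cong: "fs (d(i := x)) G = fs d G" for d :: "'a \<Rightarrow> 'u" and x
    by (rule os.cong) (use insert.hyps(2) in auto)
  have ins: "fs d (insert i G) = oadd A (Some (d i)) (fs d G)" for d :: "'a \<Rightarrow> 'u"
    by (rule os.insert[OF insert.hyps(1,2)])
  have step1: "\<exists>bx. padd A b x = Some bx \<and> (\<exists>y. oadd A (Some bx) (fs u G) = Some y \<and> nle A y v)"
    if x: "x \<in> D i" for x
  proof -
    have ch: "\<exists>y. oadd A (Some b) (oadd A (Some x) (fs d G)) = Some y \<and> nle A y v"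
      if dG: "\<And>j. j \<in> G \<Longrightarrow> d j \<in> D j" for d
    proof -
      have "\<And>j. j \<in> insert i G \<Longrightarrow> (d(i := x)) j \<in> D j" using dG x by auto
      from insert.prems(2)[OF this] show ?thesis unfolding ins cong by simp
    qed
    from ch[of d0] d0 obtain y0 where y0: "oadd A (Some b) (oadd A (Some x) (fs d0 G)) = Some y0" by auto
    then have "oadd A (oadd A (Some b) (Some x)) (fs d0 G) = Some y0" by (simp only: os.assoc)
    then obtain bx where bx: "padd A b x = Some bx" using oadd_Some by fastforce
    have "\<exists>y. oadd A (Some bx) (fs u G) = Some y \<and> nle A y v"
    proof (rule insert.IH)
      show "\<And>j. j \<in> G \<Longrightarrow> directed A (D j) \<and> is_lub A (D j) (u j)" using insert.prems(1) by auto
    next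
      fix d assume dG: "\<And>j. j \<in> G \<Longrightarrow> d j \<in> D j"
      from ch[OF dG] obtain y where y: "oadd A (Some b) (oadd A (Some x) (fs d G)) = Some y" "nle A y v" by auto
      have eq: "oadd A (Some b) (oadd A (Some x) (fs d G)) = oadd A (Some bx) (fs d G)"
        using bx by (simp only: os.assoc[symmetric] oadd_simps(3))
      have "oadd A (Some bx) (fs d G) = Some y" using y(1) unfolding eq .
      then show "\<exists>y. oadd A (Some bx) (fs d G) = Some y \<and> nle A y v" using y(2) by auto
    qed
    then show ?thesis using bx by auto
  qed
  obtain x0 where x0: "x0 \<in> D i" using d0[of i] by auto
  from step1[OF x0] obtain bx0 y0 where "oadd A (Some bx0) (fs u G) = Some y0" by auto
  then obtain w where w: "fs u G = Some w" using oadd_SomeE by fastforce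
  obtain y1 where y1: "oadd A (Some x0) (oadd A (Some b) (Some w)) = Some y1"
  proof -
    from step1[OF x0] obtain bx y where "padd A b x0 = Some bx" "oadd A (Some bx) (fs u G) = Some y" by auto
    then have "oadd A (oadd A (Some b) (Some x0)) (Some w) = Some y" using w by simp
    then have "oadd A (Some x0) (oadd A (Some b) (Some w)) = Some y" by (metis os.assoc os.commute)
    then show ?thesis using that by auto
  qed
  then obtain c where c: "padd A b w = Some c" using oadd_Some by fastforce
  have xc: "\<exists>y. padd A x c = Some y \<and> nle A y v" if x: "x \<in> D i" for x
  proof -
    from step1[OF x] obtain bx y where bx: "padd A b x = Some bx" and y: "oadd A (Some bx) (fs u G) = Some y" "nle A y v" by auto
    have "oadd A (oadd A (Some b) (Some x)) (Some w) = Some y" using bx y w by simp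
    then have "oadd A (Some x) (oadd A (Some b) (Some w)) = Some y" by (metis os.assoc os.commute)
    then have "padd A x c = Some y" using c by simp
    then show ?thesis using y by auto
  qed
  have "\<forall>d\<in>D i. padd A d c \<noteq> None" using xc by fastforce
  from scott_add[OF di this] obtain s where s: "padd A (u i) c = Some s"
    and sl: "is_lub A ((\<lambda>d. the (padd A d c)) ` D i) s" by auto
  have "nle A s v"
  proof (rule lubD2[OF sl])
    fix z assume "z \<in> (\<lambda>d. the (padd A d c)) ` D i"
    then obtain x where x: "x \<in> D i" and z: "z = the (padd A x c)" by auto
    from xc[OF x] show "nle A z v" using z by auto
  qed
  moreover have "oadd A (Some b) (fs u (insert i G)) = Some s"
  proof -
    have "oadd A (Some b) (fs u (insert i G)) = oadd A (Some b) (oadd A (Some (u i)) (Some w))"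
      unfolding ins w ..
    also have "\<dots> = oadd A (Some (u i)) (oadd A (Some b) (Some w))" by (rule os.left_commute)
    also have "\<dots> = Some s" using c s by simp
    finally show ?thesis .
  qed
  ultimately show ?case by auto
qed

lemma fs_prod:
  assumes "finite G" "finite H"
  shows "fs (\<lambda>(i,j). a i j) (G \<times> H) = os.F (\<lambda>i. fs (a i) H) G"
proof -
  have "os.F (\<lambda>i. fs (a i) H) G = os.F (case_prod (\<lambda>i j. Some (a i j))) (G \<times> H)"
    by (rule os.cartesian_product)
  also have "case_prod (\<lambda>i j. Some (a i j)) = (\<lambda>p. Some (case p of (i, j) \<Rightarrow> a i j))"
    by (auto simp: fun_eq_iff split: prod.split)
  finally show ?thesis by simp
qed

lemma prod_bound:
  assumes G: "finite G" "G \<subseteq> I" and H: "finite H" "H \<subseteq> J"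
    and inner: "\<And>i. i \<in> I \<Longrightarrow> has_psum A (a i) J (s i)"
    and sG: "fs s G = Some \<sigma>"
  shows "\<exists>x. fs (\<lambda>(i,j). a i j) (G \<times> H) = Some x \<and> nle A x \<sigma>"
proof -
  define t where "t i = the (fs (a i) H)" for i
  have ti: "fs (a i) H = Some (t i) \<and> nle A (t i) (s i)" if "i \<in> G" for i
  proof -
    from hp_le[OF inner H] that G obtain x where "fs (a i) H = Some x" "nle A x (s i)" by auto
    then show ?thesis unfolding t_def by simp
  qed
  have eq: "os.F (\<lambda>i. fs (a i) H) G = fs t G"
    by (rule os.cong) (use ti in auto)
  from fs_mono[OF G(1) _ sG, of t] ti obtain x where "fs t G = Some x" "nle A x \<sigma>" by auto
  then show ?thesis using fs_prod[OF G(1) H(1), of a] eq by auto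
qed

lemma key_sum:
  assumes G: "finite G" "G \<subseteq> I"
    and inner: "\<And>i. i \<in> I \<Longrightarrow> has_psum A (a i) J (s i)"
    and bnd: "\<And>H. finite H \<Longrightarrow> H \<subseteq> J \<Longrightarrow> \<exists>x. fs (\<lambda>(i,j). a i j) (G \<times> H) = Some x \<and> nle A x v"
  shows "\<exists>\<sigma>. fs s G = Some \<sigma> \<and> nle A \<sigma> v"
proof -
  have "\<exists>x. oadd A (Some (pzero A)) (fs s G) = Some x \<and> nle A x v"
  proof (rule lub_sum[OF G(1), of "\<lambda>i. PSs (a i) J"])
    fix i assume "i \<in> G"
    then have "i \<in> I" using G by auto
    show "directed A (PSs (a i) J) \<and> is_lub A (PSs (a i) J) (s i)"
      using PSs_directed[OF hp_def[OF inner[OF \<open>i \<in> I\<close>]]] hp_lub[OF inner[OF \<open>i \<in> I\<close>]] by auto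
  next
    fix d assume d: "\<And>i. i \<in> G \<Longrightarrow> d i \<in> PSs (a i) J"
    define Hs where "Hs i = (SOME H. finite H \<and> H \<subseteq> J \<and> fs (a i) H = Some (d i))" for i
    have Hs: "finite (Hs i) \<and> Hs i \<subseteq> J \<and> fs (a i) (Hs i) = Some (d i)" if "i \<in> G" for i
    proof -
      have "\<exists>H. finite H \<and> H \<subseteq> J \<and> fs (a i) H = Some (d i)" using d[OF that] unfolding PSs_def by auto
      then show ?thesis unfolding Hs_def by (rule someI_ex)
    qed
    define HH where "HH = \<Union> (Hs ` G)"
    have HH: "finite HH" "HH \<subseteq> J" using Hs G unfolding HH_def by auto
    from bnd[OF HH] obtain x where x: "fs (\<lambda>(i,j). a i j) (G \<times> HH) = Some x" "nle A x v" by auto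
    define t where "t i = the (fs (a i) HH)" for i
    have ti: "fs (a i) HH = Some (t i) \<and> nle A (d i) (t i)" if "i \<in> G" for i
    proof -
      have "i \<in> I" using that G by auto
      have "fs (a i) HH \<noteq> None" using hp_def[OF inner[OF \<open>i \<in> I\<close>]] HH by auto
      then have "fs (a i) HH = Some (t i)" unfolding t_def by auto
      moreover have "Hs i \<subseteq> HH" using that unfolding HH_def by auto
      ultimately show ?thesis using fs_subset[OF HH(1) _ \<open>fs (a i) HH = Some (t i)\<close>, of "Hs i"] Hs[OF that] by auto
    qed
    have eq: "os.F (\<lambda>i. fs (a i) HH) G = fs t G"
      by (rule os.cong) (use ti in auto)
    have "fs t G = Some x" using x(1) fs_prod[OF G(1) HH(1), of a] eq by simp
    from fs_mono[OF G(1) _ this, of d] ti obtain y where "fs d G = Some y" "nle A y x" by auto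
    then show "\<exists>x. oadd A (Some (pzero A)) (fs d G) = Some x \<and> nle A x v" using x(2) nle_trans by auto
  qed
  then show ?thesis by simp
qed

lemma fub_fwd:
  assumes inner: "\<And>i. i \<in> I \<Longrightarrow> has_psum A (a i) J (s i)" and outer: "has_psum A s I S"
  shows "has_psum A (\<lambda>(i,j). a i j) (I \<times> J) S"
proof -
  have part: "\<exists>x. fs (\<lambda>(i,j). a i j) F = Some x \<and> nle A x S" if F: "finite F" "F \<subseteq> I \<times> J" for F
  proof -
    have G: "finite (fst ` F)" "fst ` F \<subseteq> I" using F by auto
    have H: "finite (snd ` F)" "snd ` F \<subseteq> J" using F by auto
    from hp_le[OF outer G] obtain \<sigma> where \<sigma>: "fs s (fst ` F) = Some \<sigma>" "nle A \<sigma> S" by auto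
    from prod_bound[OF G H inner \<sigma>(1)] obtain x where x: "fs (\<lambda>(i,j). a i j) (fst ` F \<times> snd ` F) = Some x" "nle A x \<sigma>"
      by auto
    have "F \<subseteq> fst ` F \<times> snd ` F" by force
    from fs_subset[OF _ this x(1)] G H obtain y where "fs (\<lambda>(i,j). a i j) F = Some y" "nle A y x" by auto
    then show ?thesis using x(2) \<sigma>(2) nle_trans by blast
  qed
  show ?thesis
  proof (rule hp_intro)
    fix F assume "finite F" "F \<subseteq> I \<times> J" then show "\<exists>x. fs (\<lambda>(i,j). a i j) F = Some x \<and> nle A x S" by (rule part)
  next
    fix v assume v: "\<And>F s. finite F \<Longrightarrow> F \<subseteq> I \<times> J \<Longrightarrow> fs (\<lambda>(i,j). a i j) F = Some s \<Longrightarrow> nle A s v"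
    show "nle A S v"
    proof (rule hp_least[OF outer])
      fix G \<sigma> assume G: "finite G" "G \<subseteq> I" "fs s G = Some \<sigma>"
      have "\<exists>\<sigma>. fs s G = Some \<sigma> \<and> nle A \<sigma> v"
      proof (rule key_sum[OF G(1,2) inner])
        fix H assume H: "finite H" "H \<subseteq> J"
        have "finite (G \<times> H)" "G \<times> H \<subseteq> I \<times> J" using G H by auto
        from part[OF this] obtain x where "fs (\<lambda>(i,j). a i j) (G \<times> H) = Some x" by auto
        then show "\<exists>x. fs (\<lambda>(i,j). a i j) (G \<times> H) = Some x \<and> nle A x v"
          using v[OF \<open>finite (G \<times> H)\<close> \<open>G \<times> H \<subseteq> I \<times> J\<close>] by auto
      qed
      then show "nle A \<sigma> v" using G(3) by auto
    qed
  qed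
qed

lemma fub_conv:
  assumes tot: "has_psum A (\<lambda>(i,j). a i j) (I \<times> J) S" and inner: "\<And>i. i \<in> I \<Longrightarrow> has_psum A (a i) J (s i)"
  shows "has_psum A s I S"
proof -
  have part: "\<exists>\<sigma>. fs s G = Some \<sigma> \<and> nle A \<sigma> S" if G: "finite G" "G \<subseteq> I" for G
  proof (rule key_sum[OF G inner])
    fix H assume H: "finite H" "H \<subseteq> J"
    have "finite (G \<times> H)" "G \<times> H \<subseteq> I \<times> J" using G H by auto
    from hp_le[OF tot this] show "\<exists>x. fs (\<lambda>(i,j). a i j) (G \<times> H) = Some x \<and> nle A x S" .
  qed
  show ?thesis
  proof (rule hp_intro)
    fix G assume "finite G" "G \<subseteq> I" then show "\<exists>\<sigma>. fs s G = Some \<sigma> \<and> nle A \<sigma> S" by (rule part)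
  next
    fix v assume v: "\<And>G \<sigma>. finite G \<Longrightarrow> G \<subseteq> I \<Longrightarrow> fs s G = Some \<sigma> \<Longrightarrow> nle A \<sigma> v"
    show "nle A S v"
    proof (rule hp_least[OF tot])
      fix F y assume F: "finite F" "F \<subseteq> I \<times> J" "fs (\<lambda>(i,j). a i j) F = Some y"
      have G: "finite (fst ` F)" "fst ` F \<subseteq> I" using F by auto
      have H: "finite (snd ` F)" "snd ` F \<subseteq> J" using F by auto
      from part[OF G] obtain \<sigma> where \<sigma>: "fs s (fst ` F) = Some \<sigma>" by auto
      have \<sigma>v: "nle A \<sigma> v" using v[OF G \<sigma>] .
      from prod_bound[OF G H inner \<sigma>] obtain x where x: "fs (\<lambda>(i,j). a i j) (fst ` F \<times> snd ` F) = Some x" "nle A x \<sigma>"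
        by auto
      have "F \<subseteq> fst ` F \<times> snd ` F" by force
      from fs_subset[OF _ this x(1)] G H obtain y' where "fs (\<lambda>(i,j). a i j) F = Some y'" "nle A y' x" by auto
      then show "nle A y v" using F(3) x(2) \<sigma>v nle_trans by auto
    qed
  qed
qed

lemma fub_swap:
  assumes i1: "\<And>i. i \<in> I \<Longrightarrow> has_psum A (\<lambda>j. a i j) J (s i)" and o1: "has_psum A s I S"
    and i2: "\<And>j. j \<in> J \<Longrightarrow> has_psum A (\<lambda>i. a i j) I (t j)"
  shows "has_psum A t J S"
proof -
  have "has_psum A (\<lambda>(i,j). a i j) (I \<times> J) S" using fub_fwd[of I a J s S] i1 o1 by auto
  then have "has_psum A (\<lambda>(j,i). a i j) (J \<times> I) S" by (rule hp_swap)
  then show ?thesis using fub_conv[of "\<lambda>j i. a i j" J I S t] i2 by auto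
qed

lemma hp_top:
  assumes "has_psum A m S M"
  shows "\<exists>u. has_psum A (\<lambda>x. pmul A (m x) (f x)) S u"
proof -
  obtain T where T: "\<And>a. nle A a T" using top by auto
  have h: "has_psum A (\<lambda>x. pmul A (m x) T) S (pmul A M T)" by (rule hp_scale_r[OF assms])
  have le: "\<And>x. x \<in> S \<Longrightarrow> nle A (pmul A (m x) (f x)) (pmul A (m x) T)" using mul_mono_l T by auto
  from hp_dom[OF le h] show ?thesis by auto
qed


lemma hp_UNIV_supp: "has_psum A m (supp A m) u \<longleftrightarrow> has_psum A m UNIV u"
  by (rule hp_zero_cong) (auto simp: supp_def)

lemma inW_iff: "inW A m \<longleftrightarrow> countable (supp A m) \<and> (\<exists>M. has_psum A m UNIV M)"
proof -
  have "psum A m (supp A m) \<noteq> None \<longleftrightarrow> (\<exists>M. has_psum A m UNIV M)"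
  proof
    assume "psum A m (supp A m) \<noteq> None"
    then obtain M where "psum A m (supp A m) = Some M" by auto
    then have "has_psum A m (supp A m) M" by (rule psum_SomeD)
    then show "\<exists>M. has_psum A m UNIV M" using hp_UNIV_supp by auto
  next
    assume "\<exists>M. has_psum A m UNIV M"
    then obtain M where "has_psum A m UNIV M" by auto
    then have "has_psum A m (supp A m) M" using hp_UNIV_supp by auto
    then show "psum A m (supp A m) \<noteq> None" using psum_eq by auto
  qed
  then show ?thesis unfolding inW_def by auto
qed

lemma inW_dom:
  assumes "\<And>\<tau>. nle A (g \<tau>) (h \<tau>)" "inW A h"
  shows "inW A g"
proof -
  obtain H where H: "has_psum A h UNIV H" and c: "countable (supp A h)" using assms(2) inW_iff by auto
  from hp_dom[of UNIV g h, OF _ H] assms(1) obtain u where "has_psum A g UNIV u" by auto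
  moreover have "supp A g \<subseteq> supp A h"
  proof
    fix x assume "x \<in> supp A g"
    then show "x \<in> supp A h" using assms(1)[of x] le_zero unfolding supp_def by auto
  qed
  then have "countable (supp A g)" using c by (rule countable_subset)
  ultimately show ?thesis using inW_iff by auto
qed

lemma inW_eta: "inW A (eta A \<sigma>)"
proof -
  have "supp A (eta A \<sigma>) \<subseteq> {\<sigma>}" unfolding supp_def eta_def by auto
  then have "countable (supp A (eta A \<sigma>))" by (rule countable_subset) simp
  moreover have "has_psum A (eta A \<sigma>) UNIV (eta A \<sigma> \<sigma>)"
  proof -
    have "has_psum A (eta A \<sigma>) {\<sigma>} (eta A \<sigma> \<sigma>)" by (rule hp_single)
    moreover have z: "{\<sigma>} \<inter> {x. eta A \<sigma> x \<noteq> pzero A} = UNIV \<inter> {x. eta A \<sigma> x \<noteq> pzero A}"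
      unfolding eta_def by auto
    ultimately show ?thesis using hp_zero_cong[OF z] by simp
  qed
  ultimately show ?thesis using inW_iff by auto
qed

lemma inW_wscale: "inW A m \<Longrightarrow> inW A (wscale A a m)"
proof -
  assume "inW A m"
  then obtain M where M: "has_psum A m UNIV M" and c: "countable (supp A m)" using inW_iff by auto
  have "has_psum A (wscale A a m) UNIV (pmul A a M)" unfolding wscale_def by (rule hp_scale_l[OF M])
  moreover have "supp A (wscale A a m) \<subseteq> supp A m" unfolding supp_def wscale_def by auto
  then have "countable (supp A (wscale A a m))" using c by (rule countable_subset)
  ultimately show ?thesis using inW_iff by auto
qed

lemma inW_wzero: "inW A (wzero A :: 's \<Rightarrow> 'u)"
proof -
  have "has_psum A (wzero A :: 's \<Rightarrow> 'u) UNIV (pzero A)" by (rule hp_all_zero) (simp add: wzero_def)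
  moreover have "supp A (wzero A :: 's \<Rightarrow> 'u) = {}" unfolding supp_def wzero_def by auto
  then have "countable (supp A (wzero A :: 's \<Rightarrow> 'u))" by simp
  ultimately show ?thesis unfolding inW_iff by blast
qed

definition kW :: "('s \<Rightarrow> 's \<Rightarrow> 'u) \<Rightarrow> bool" where
  "kW f \<longleftrightarrow> (\<forall>\<sigma>. inW A (f \<sigma>))"

lemma bind_ok:
  assumes m: "inW A m" and f: "kW f"
  shows "bind A f m = Some (bv A f m) \<and> inW A (bv A f m) \<and>
         (\<forall>\<tau>. has_psum A (\<lambda>\<sigma>. pmul A (m \<sigma>) (f \<sigma> \<tau>)) UNIV (bv A f m \<tau>))"
proof -
  obtain M where M: "has_psum A m UNIV M" and cm: "countable (supp A m)" using m inW_iff by auto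
  have z: "supp A m \<inter> {x. pmul A (m x) (f x \<tau>) \<noteq> pzero A} = UNIV \<inter> {x. pmul A (m x) (f x \<tau>) \<noteq> pzero A}" for \<tau>
    unfolding supp_def by auto
  have coord: "has_psum A (\<lambda>\<sigma>. pmul A (m \<sigma>) (f \<sigma> \<tau>)) UNIV (bv A f m \<tau>) \<and>
               psum A (\<lambda>\<sigma>. pmul A (m \<sigma>) (f \<sigma> \<tau>)) (supp A m) = Some (bv A f m \<tau>)" for \<tau>
  proof -
    from hp_top[OF M, of "\<lambda>\<sigma>. f \<sigma> \<tau>"] obtain u where u: "has_psum A (\<lambda>\<sigma>. pmul A (m \<sigma>) (f \<sigma> \<tau>)) UNIV u" by auto
    then have u2: "has_psum A (\<lambda>\<sigma>. pmul A (m \<sigma>) (f \<sigma> \<tau>)) (supp A m) u" using hp_zero_cong[OF z] by auto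
    then have p: "psum A (\<lambda>\<sigma>. pmul A (m \<sigma>) (f \<sigma> \<tau>)) (supp A m) = Some u" by (rule psum_eq)
    then have "bv A f m \<tau> = u" unfolding bv_def by simp
    then show ?thesis using u p by simp
  qed
  have cnt: "countable (supp A (bv A f m))"
  proof -
    have "supp A (bv A f m) \<subseteq> (\<Union>\<sigma>\<in>supp A m. supp A (f \<sigma>))"
    proof
      fix \<tau> assume t: "\<tau> \<in> supp A (bv A f m)"
      show "\<tau> \<in> (\<Union>\<sigma>\<in>supp A m. supp A (f \<sigma>))"
      proof (rule ccontr)
        assume nt: "\<tau> \<notin> (\<Union>\<sigma>\<in>supp A m. supp A (f \<sigma>))"
        have "pmul A (m \<sigma>) (f \<sigma> \<tau>) = pzero A" for \<sigma>
        proof (cases "m \<sigma> = pzero A")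
          case True then show ?thesis by simp
        next
          case False then have "f \<sigma> \<tau> = pzero A" using nt unfolding supp_def by auto
          then show ?thesis by simp
        qed
        then have "has_psum A (\<lambda>\<sigma>. pmul A (m \<sigma>) (f \<sigma> \<tau>)) UNIV (pzero A)" by (intro hp_all_zero) auto
        then have "bv A f m \<tau> = pzero A" using coord[of \<tau>] hp_unique by auto
        then show False using t unfolding supp_def by auto
      qed
    qed
    moreover have "countable (\<Union>\<sigma>\<in>supp A m. supp A (f \<sigma>))"
      by (rule countable_UN[OF cm]) (use f in \<open>auto simp: kW_def inW_iff\<close>)
    ultimately show ?thesis by (rule countable_subset)
  qed
  have mass: "\<exists>X. has_psum A (bv A f m) UNIV X"
  proof -
    define Fm where "Fm \<sigma> = (SOME F. has_psum A (f \<sigma>) UNIV F)" for \<sigma>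
    have Fm: "has_psum A (f \<sigma>) UNIV (Fm \<sigma>)" for \<sigma>
    proof -
      have "\<exists>F. has_psum A (f \<sigma>) UNIV F" using f unfolding kW_def inW_iff by auto
      then show ?thesis unfolding Fm_def by (rule someI_ex)
    qed
    from hp_top[OF M, of Fm] obtain X where X: "has_psum A (\<lambda>\<sigma>. pmul A (m \<sigma>) (Fm \<sigma>)) UNIV X" by auto
    have "has_psum A (bv A f m) UNIV X"
    proof (rule fub_swap[of UNIV "\<lambda>\<sigma> \<tau>. pmul A (m \<sigma>) (f \<sigma> \<tau>)" UNIV "\<lambda>\<sigma>. pmul A (m \<sigma>) (Fm \<sigma>)"])
      fix \<sigma>
      show "has_psum A (\<lambda>\<tau>. pmul A (m \<sigma>) (f \<sigma> \<tau>)) UNIV (pmul A (m \<sigma>) (Fm \<sigma>))" by (rule hp_scale_l[OF Fm])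
    next
      show "has_psum A (\<lambda>\<sigma>. pmul A (m \<sigma>) (Fm \<sigma>)) UNIV X" by (rule X)
    next
      fix \<tau>
      show "has_psum A (\<lambda>\<sigma>. pmul A (m \<sigma>) (f \<sigma> \<tau>)) UNIV (bv A f m \<tau>)" using coord by auto
    qed
    then show ?thesis by auto
  qed
  have w: "inW A (bv A f m)" using cnt mass inW_iff by auto
  have "bind A f m = Some (bv A f m)"
  proof -
    have "(\<lambda>\<tau>. the (psum A (\<lambda>\<sigma>. pmul A (m \<sigma>) (f \<sigma> \<tau>)) (supp A m))) = bv A f m" unfolding bv_def ..
    moreover have "\<forall>\<tau>. psum A (\<lambda>\<sigma>. pmul A (m \<sigma>) (f \<sigma> \<tau>)) (supp A m) \<noteq> None" using coord by auto
    ultimately show ?thesis using w unfolding bind_def Let_def by auto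
  qed
  then show ?thesis using w coord by auto
qed

lemma bv_hp: "inW A m \<Longrightarrow> kW f \<Longrightarrow> has_psum A (\<lambda>\<sigma>. pmul A (m \<sigma>) (f \<sigma> \<tau>)) UNIV (bv A f m \<tau>)"
  using bind_ok by blast

lemma bv_inW: "inW A m \<Longrightarrow> kW f \<Longrightarrow> inW A (bv A f m)"
  using bind_ok by blast

lemma bv_eq:
  assumes "inW A m" "kW f" "\<And>\<tau>. has_psum A (\<lambda>\<sigma>. pmul A (m \<sigma>) (f \<sigma> \<tau>)) UNIV (r \<tau>)"
  shows "bv A f m = r"
proof
  fix \<tau> show "bv A f m \<tau> = r \<tau>" using hp_unique[OF bv_hp[OF assms(1,2)] assms(3)] .
qed

lemma kW_eta: "kW (eta A)" unfolding kW_def using inW_eta by auto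

lemma bv_eta_left:
  assumes f: "kW f"
  shows "bv A f (eta A \<sigma>) = f \<sigma>"
proof (rule bv_eq[OF inW_eta f])
  fix \<tau>
  have "has_psum A (\<lambda>\<rho>. pmul A (eta A \<sigma> \<rho>) (f \<rho> \<tau>)) {\<sigma>} (f \<sigma> \<tau>)"
    using hp_single[of "\<lambda>\<rho>. pmul A (eta A \<sigma> \<rho>) (f \<rho> \<tau>)" \<sigma>] by (simp add: eta_def)
  moreover have z: "{\<sigma>} \<inter> {\<rho>. pmul A (eta A \<sigma> \<rho>) (f \<rho> \<tau>) \<noteq> pzero A} = UNIV \<inter> {\<rho>. pmul A (eta A \<sigma> \<rho>) (f \<rho> \<tau>) \<noteq> pzero A}"
    by (auto simp: eta_def)
  ultimately show "has_psum A (\<lambda>\<rho>. pmul A (eta A \<sigma> \<rho>) (f \<rho> \<tau>)) UNIV (f \<sigma> \<tau>)"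
    using hp_zero_cong[OF z] by simp
qed

lemma bv_eta_right:
  assumes m: "inW A m"
  shows "bv A (eta A) m = m"
proof (rule bv_eq[OF m kW_eta])
  fix \<tau>
  have "has_psum A (\<lambda>\<rho>. pmul A (m \<rho>) (eta A \<rho> \<tau>)) {\<tau>} (m \<tau>)"
    using hp_single[of "\<lambda>\<rho>. pmul A (m \<rho>) (eta A \<rho> \<tau>)" \<tau>] by (simp add: eta_def)
  moreover have z: "{\<tau>} \<inter> {\<rho>. pmul A (m \<rho>) (eta A \<rho> \<tau>) \<noteq> pzero A} = UNIV \<inter> {\<rho>. pmul A (m \<rho>) (eta A \<rho> \<tau>) \<noteq> pzero A}"
    by (auto simp: eta_def)
  ultimately show "has_psum A (\<lambda>\<rho>. pmul A (m \<rho>) (eta A \<rho> \<tau>)) UNIV (m \<tau>)"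
    using hp_zero_cong[OF z] by simp
qed

lemma bv_scale:
  assumes m: "inW A m" and f: "kW f"
  shows "bv A f (wscale A a m) = wscale A a (bv A f m)"
proof (rule bv_eq[OF inW_wscale[OF m] f])
  fix \<tau>
  have "has_psum A (\<lambda>\<sigma>. pmul A a (pmul A (m \<sigma>) (f \<sigma> \<tau>))) UNIV (pmul A a (bv A f m \<tau>))"
    by (rule hp_scale_l[OF bv_hp[OF m f]])
  then show "has_psum A (\<lambda>\<sigma>. pmul A (wscale A a m \<sigma>) (f \<sigma> \<tau>)) UNIV (wscale A a (bv A f m) \<tau>)"
    unfolding wscale_def by (simp add: mul_assoc)
qed

lemma bv_assoc:
  assumes m: "inW A m" and f: "kW f" and g: "kW g"
  shows "bv A g (bv A f m) = bv A (\<lambda>\<sigma>. bv A g (f \<sigma>)) m"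
proof -
  have fg: "kW (\<lambda>\<sigma>. bv A g (f \<sigma>))" using bv_inW f g unfolding kW_def by auto
  have fm: "inW A (bv A f m)" by (rule bv_inW[OF m f])
  show ?thesis
  proof (rule bv_eq[OF fm g])
    fix \<tau>
    show "has_psum A (\<lambda>\<rho>. pmul A (bv A f m \<rho>) (g \<rho> \<tau>)) UNIV (bv A (\<lambda>\<sigma>. bv A g (f \<sigma>)) m \<tau>)"
    proof (rule fub_swap[of UNIV "\<lambda>\<sigma> \<rho>. pmul A (m \<sigma>) (pmul A (f \<sigma> \<rho>) (g \<rho> \<tau>))" UNIV
          "\<lambda>\<sigma>. pmul A (m \<sigma>) (bv A g (f \<sigma>) \<tau>)"])
      fix \<sigma>
      have "inW A (f \<sigma>)" using f unfolding kW_def by auto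
      from hp_scale_l[OF bv_hp[OF this g, of \<tau>], of "m \<sigma>"]
      show "has_psum A (\<lambda>\<rho>. pmul A (m \<sigma>) (pmul A (f \<sigma> \<rho>) (g \<rho> \<tau>))) UNIV (pmul A (m \<sigma>) (bv A g (f \<sigma>) \<tau>))" .
    next
      show "has_psum A (\<lambda>\<sigma>. pmul A (m \<sigma>) (bv A g (f \<sigma>) \<tau>)) UNIV (bv A (\<lambda>\<sigma>. bv A g (f \<sigma>)) m \<tau>)"
        by (rule bv_hp[OF m fg])
    next
      fix \<rho>
      from hp_scale_r[OF bv_hp[OF m f, of \<rho>], of "g \<rho> \<tau>"]
      show "has_psum A (\<lambda>\<sigma>. pmul A (m \<sigma>) (pmul A (f \<sigma> \<rho>) (g \<rho> \<tau>))) UNIV (pmul A (bv A f m \<rho>) (g \<rho> \<tau>))"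
        by (simp add: mul_assoc)
    qed
  qed
qed


lemma sem_inW: "sem A P \<sigma> = Some m \<Longrightarrow> inW A m"
proof (induction P arbitrary: \<sigma> m)
  case Skip then have "m = eta A \<sigma>" by simp
  then show ?case using inW_eta by simp
next
  case (Seq P1 P2)
  then show ?case by (auto simp: bind_def Let_def split: option.splits if_splits)
next
  case (Assume e) then have "m = wscale A (esem A e \<sigma>) (eta A \<sigma>)" by simp
  then show ?case using inW_wscale[OF inW_eta] by simp
next
  case (Atom K) then show ?case by (auto split: if_splits)
qed

lemma kW_K: "total_sem A P \<Longrightarrow> kW (Ksem A P)"
  unfolding kW_def Ksem_def
proof
  fix \<sigma> assume t: "total_sem A P"
  then obtain m where m: "sem A P \<sigma> = Some m" unfolding total_sem_def by auto
  then have "inW A m" by (rule sem_inW)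
  then show "inW A (the (sem A P \<sigma>))" using m by simp
qed

lemma sem_K: "total_sem A P \<Longrightarrow> sem A P \<sigma> = Some (Ksem A P \<sigma>)"
  unfolding total_sem_def Ksem_def by auto

lemma total_Skip: "total_sem A Skip" unfolding total_sem_def by simp
lemma total_Assume: "total_sem A (Assume e)" unfolding total_sem_def by simp
lemma K_Skip: "Ksem A Skip = eta A" unfolding Ksem_def by (simp add: fun_eq_iff)
lemma K_Assume: "Ksem A (Assume e) \<sigma> = wscale A (esem A e \<sigma>) (eta A \<sigma>)" unfolding Ksem_def by simp

lemma sem_Seq:
  assumes P: "total_sem A P" and Q: "total_sem A Q"
  shows "sem A (Seq P Q) \<sigma> = Some (bv A (Ksem A Q) (Ksem A P \<sigma>))"
proof -
  obtain m where sm: "sem A P \<sigma> = Some m" using P unfolding total_sem_def by auto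
  have Km: "Ksem A P \<sigma> = m" using sm unfolding Ksem_def by simp
  have mW: "inW A m" using sem_inW[OF sm] .
  have b: "bind A (Ksem A Q) m = Some (bv A (Ksem A Q) m)" using bind_ok[OF mW kW_K[OF Q]] by auto
  have "\<forall>\<sigma>'. sem A Q \<sigma>' \<noteq> None" using Q unfolding total_sem_def by auto
  then show ?thesis using sm b unfolding Km by (simp add: Ksem_def)
qed

lemma total_Seq:
  assumes P: "total_sem A P" and Q: "total_sem A Q" shows "total_sem A (Seq P Q)"
  unfolding total_sem_def
proof
  fix \<sigma> show "sem A (Seq P Q) \<sigma> \<noteq> None" using sem_Seq[OF P Q, of \<sigma>] by (simp only: option.distinct(2) not_False_eq_True)
qed

lemma K_Seq:
  assumes P: "total_sem A P" and Q: "total_sem A Q"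
  shows "Ksem A (Seq P Q) \<sigma> = bv A (Ksem A Q) (Ksem A P \<sigma>)"
proof -
  have "Ksem A (Seq P Q) \<sigma> = the (sem A (Seq P Q) \<sigma>)" unfolding Ksem_def ..
  also have "sem A (Seq P Q) \<sigma> = Some (bv A (Ksem A Q) (Ksem A P \<sigma>))" by (rule sem_Seq[OF P Q])
  finally show ?thesis by (simp only: option.sel)
qed

lemma total_ppow: "total_sem A D \<Longrightarrow> total_sem A (ppow D k)"
  by (induction k) (auto intro: total_Seq total_Skip)

lemma K_inW: "total_sem A P \<Longrightarrow> inW A (Ksem A P \<sigma>)"
  using kW_K unfolding kW_def by auto

lemma Q_step:
  assumes D: "total_sem A D"
  shows "Ksem A (ppow D (Suc k)) \<sigma> = bv A (Ksem A (ppow D k)) (Ksem A D \<sigma>)"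
proof (induction k arbitrary: \<sigma>)
  case 0
  have "Ksem A (ppow D (Suc 0)) \<sigma> = bv A (Ksem A D) (eta A \<sigma>)"
    using K_Seq[OF total_Skip D] by (simp add: K_Skip)
  also have "\<dots> = Ksem A D \<sigma>" by (rule bv_eta_left[OF kW_K[OF D]])
  also have "\<dots> = bv A (eta A) (Ksem A D \<sigma>)" by (rule bv_eta_right[OF K_inW[OF D], symmetric])
  finally show ?case by (simp add: K_Skip)
next
  case (Suc k)
  have tk: "total_sem A (ppow D k)" "total_sem A (ppow D (Suc k))" by (rule total_ppow[OF D])+
  have "Ksem A (ppow D (Suc (Suc k))) \<sigma> = bv A (Ksem A D) (Ksem A (ppow D (Suc k)) \<sigma>)"
    using K_Seq[OF tk(2) D] by simp
  also have "\<dots> = bv A (Ksem A D) (bv A (Ksem A (ppow D k)) (Ksem A D \<sigma>))" using Suc.IH by simp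
  also have "\<dots> = bv A (\<lambda>\<rho>. bv A (Ksem A D) (Ksem A (ppow D k) \<rho>)) (Ksem A D \<sigma>)"
    by (rule bv_assoc[OF K_inW[OF D] kW_K[OF tk(1)] kW_K[OF D]])
  also have "(\<lambda>\<rho>. bv A (Ksem A D) (Ksem A (ppow D k) \<rho>)) = Ksem A (ppow D (Suc k))"
    using K_Seq[OF tk(1) D] by (simp add: fun_eq_iff)
  finally show ?case .
qed

lemma P_step:
  assumes D: "total_sem A D" and E: "total_sem A E"
  shows "Ksem A (Seq (ppow D (Suc k)) E) \<sigma> = bv A (Ksem A (Seq (ppow D k) E)) (Ksem A D \<sigma>)"
proof -
  have tk: "total_sem A (ppow D k)" "total_sem A (ppow D (Suc k))" by (rule total_ppow[OF D])+
  have "Ksem A (Seq (ppow D (Suc k)) E) \<sigma> = bv A (Ksem A E) (Ksem A (ppow D (Suc k)) \<sigma>)"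
    by (rule K_Seq[OF tk(2) E])
  also have "\<dots> = bv A (Ksem A E) (bv A (Ksem A (ppow D k)) (Ksem A D \<sigma>))" using Q_step[OF D] by simp
  also have "\<dots> = bv A (\<lambda>\<rho>. bv A (Ksem A E) (Ksem A (ppow D k) \<rho>)) (Ksem A D \<sigma>)"
    by (rule bv_assoc[OF K_inW[OF D] kW_K[OF tk(1)] kW_K[OF E]])
  also have "(\<lambda>\<rho>. bv A (Ksem A E) (Ksem A (ppow D k) \<rho>)) = Ksem A (Seq (ppow D k) E)"
    using K_Seq[OF tk(1) E] by (simp add: fun_eq_iff)
  finally show ?thesis .
qed

lemma total_D: "total_sem A C \<Longrightarrow> total_sem A (Seq (Assume e) C)"
  by (rule total_Seq[OF total_Assume])

lemma K_D:
  assumes C: "total_sem A C"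
  shows "Ksem A (Seq (Assume e) C) \<sigma> = wscale A (esem A e \<sigma>) (Ksem A C \<sigma>)"
proof -
  have "Ksem A (Seq (Assume e) C) \<sigma> = bv A (Ksem A C) (wscale A (esem A e \<sigma>) (eta A \<sigma>))"
    by (simp add: K_Seq[OF total_Assume C] K_Assume)
  also have "\<dots> = wscale A (esem A e \<sigma>) (bv A (Ksem A C) (eta A \<sigma>))"
    by (rule bv_scale[OF inW_eta kW_K[OF C]])
  also have "\<dots> = wscale A (esem A e \<sigma>) (Ksem A C \<sigma>)" using bv_eta_left[OF kW_K[OF C]] by simp
  finally show ?thesis .
qed

lemma total_Pk: "total_sem A C \<Longrightarrow> total_sem A (Seq (ppow (Seq (Assume e) C) k) (Assume e'))"
  by (rule total_Seq[OF total_ppow[OF total_D] total_Assume])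

lemma kW_Pk: "total_sem A C \<Longrightarrow> kW (Pk A C e e' k)"
  unfolding Pk_def by (rule kW_K[OF total_Pk])

lemma Pk_Suc:
  assumes C: "total_sem A C"
  shows "Pk A C e e' (Suc k) \<sigma> = wscale A (esem A e \<sigma>) (bv A (Pk A C e e' k) (Ksem A C \<sigma>))"
proof -
  have "Pk A C e e' (Suc k) \<sigma> = bv A (Pk A C e e' k) (Ksem A (Seq (Assume e) C) \<sigma>)"
    unfolding Pk_def by (rule P_step[OF total_D[OF C] total_Assume])
  also have "\<dots> = bv A (Pk A C e e' k) (wscale A (esem A e \<sigma>) (Ksem A C \<sigma>))" using K_D[OF C] by simp
  also have "\<dots> = wscale A (esem A e \<sigma>) (bv A (Pk A C e e' k) (Ksem A C \<sigma>))"
    by (rule bv_scale[OF K_inW[OF C] kW_Pk[OF C]])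
  finally show ?thesis .
qed

lemma Pk_0:
  assumes C: "total_sem A C"
  shows "Pk A C e e' 0 \<sigma> = wscale A (esem A e' \<sigma>) (eta A \<sigma>)"
proof -
  have "Pk A C e e' 0 \<sigma> = bv A (Ksem A (Assume e')) (eta A \<sigma>)"
    unfolding Pk_def by (simp add: K_Seq[OF total_Skip total_Assume] K_Skip)
  also have "\<dots> = Ksem A (Assume e') \<sigma>" by (rule bv_eta_left[OF kW_K[OF total_Assume]])
  finally show ?thesis by (simp add: K_Assume)
qed

lemma lift_kernel_None: "lift_kernel g = None \<longleftrightarrow> (\<exists>\<sigma>. g \<sigma> = None)"
  unfolding lift_kernel_def by auto

lemma lift_kernel_Some: "lift_kernel g = Some F \<Longrightarrow> g \<sigma> = Some (F \<sigma>)"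
  unfolding lift_kernel_def by (auto split: if_splits)

lemma LS_Cons: "LS A (m # ms) \<tau> = oadd A (Some (m \<tau>)) (LS A ms \<tau>)"
  unfolding LS_def by simp

lemma wsum_char: "wsum A ms = (if (\<forall>\<tau>. LS A ms \<tau> \<noteq> None) \<and> inW A (\<lambda>\<tau>. the (LS A ms \<tau>))
    then Some (\<lambda>\<tau>. the (LS A ms \<tau>)) else None)"
proof (induction ms)
  case Nil
  have "inW A (\<lambda>\<tau>. pzero A)" using inW_wzero unfolding wzero_def .
  then show ?case by (simp add: LS_def wzero_def)
next
  case (Cons m ms)
  show ?case
  proof (cases "(\<forall>\<tau>. LS A ms \<tau> \<noteq> None) \<and> inW A (\<lambda>\<tau>. the (LS A ms \<tau>))")
    case True
    then have w: "wsum A ms = Some (\<lambda>\<tau>. the (LS A ms \<tau>))" using Cons.IH by simp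
    have e: "padd A (m \<tau>) (the (LS A ms \<tau>)) = LS A (m # ms) \<tau>" for \<tau>
    proof -
      from True have "LS A ms \<tau> \<noteq> None" by blast
      then obtain a where a: "LS A ms \<tau> = Some a" by auto
      show ?thesis unfolding LS_Cons a by simp
    qed
    show ?thesis using w by (simp add: e wadd_def)
  next
    case False
    then have w: "wsum A ms = None" using Cons.IH by simp
    have "\<not> ((\<forall>\<tau>. LS A (m # ms) \<tau> \<noteq> None) \<and> inW A (\<lambda>\<tau>. the (LS A (m # ms) \<tau>)))"
    proof
      assume a: "(\<forall>\<tau>. LS A (m # ms) \<tau> \<noteq> None) \<and> inW A (\<lambda>\<tau>. the (LS A (m # ms) \<tau>))"
      have d: "\<exists>a b. LS A ms \<tau> = Some a \<and> padd A (m \<tau>) a = Some b \<and> LS A (m # ms) \<tau> = Some b" for \<tau>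
      proof -
        obtain b where b: "LS A (m # ms) \<tau> = Some b" using a by auto
        then have "oadd A (Some (m \<tau>)) (LS A ms \<tau>) = Some b" by (simp add: LS_Cons)
        from oadd_SomeE[OF this] obtain a where "LS A ms \<tau> = Some a" "padd A (m \<tau>) a = Some b" by auto
        then show ?thesis using b by auto
      qed
      have "\<forall>\<tau>. LS A ms \<tau> \<noteq> None" using d by fastforce
      moreover have "inW A (\<lambda>\<tau>. the (LS A ms \<tau>))"
      proof (rule inW_dom[of _ "\<lambda>\<tau>. the (LS A (m # ms) \<tau>)"])
        fix \<tau>
        from d[of \<tau>] obtain a b where "LS A ms \<tau> = Some a" "padd A (m \<tau>) a = Some b" "LS A (m # ms) \<tau> = Some b" by auto
        then show "nle A (the (LS A ms \<tau>)) (the (LS A (m # ms) \<tau>))" using add_le2 by auto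
      next
        show "inW A (\<lambda>\<tau>. the (LS A (m # ms) \<tau>))" using a by auto
      qed
      ultimately show False using False by auto
    qed
    then show ?thesis using w by auto
  qed
qed

lemma LS_map: "distinct xs \<Longrightarrow> LS A (map g xs) \<tau> = os.F (\<lambda>k. Some (g k \<tau>)) (set xs)"
proof (induction xs)
  case Nil then show ?case by (simp add: LS_def)
next
  case (Cons x xs)
  then show ?case using LS_Cons[of "g x" "map g xs" \<tau>] by simp
qed

lemma those_map: "(\<And>x. x \<in> set xs \<Longrightarrow> f x = Some (g x)) \<Longrightarrow> those (map f xs) = Some (map g xs)"
  by (induction xs) auto

lemma sem_sum_R:
  assumes C: "total_sem A C"
  shows "sem_sum A (map (\<lambda>k. Seq (ppow (Seq (Assume e) C) k) (Assume e')) [0..<Suc n]) = R A C e e' (Suc n)"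
proof -
  have 1: "those (map (\<lambda>P. sem A P \<sigma>) (map (\<lambda>k. Seq (ppow (Seq (Assume e) C) k) (Assume e')) [0..<Suc n]))
      = Some (map (\<lambda>k. Pk A C e e' k \<sigma>) [0..<Suc n])" for \<sigma>
    unfolding map_map comp_def
    by (rule those_map, unfold Pk_def, rule sem_K[OF total_Pk[OF C]])
  have 2: "LS A (map (\<lambda>k. Pk A C e e' k \<sigma>) [0..<Suc n]) \<tau> = U A C e e' (Suc n) \<sigma> \<tau>" for \<sigma> \<tau>
    unfolding U_def LS_map[OF distinct_upt] set_upt atLeast0LessThan ..
  show ?thesis unfolding sem_sum_def R_def 1 Option.bind.simps(2) wsum_char 2 ..
qed

lemma U_Suc: "U A C e e' (Suc n) \<sigma> \<tau> = oadd A (U A C e e' n \<sigma> \<tau>) (Some (Pk A C e e' n \<sigma> \<tau>))"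
  unfolding U_def lessThan_Suc by (simp, rule os.commute)

lemma U_Suc0: "U A C e e' (Suc n) \<sigma> \<tau> = oadd A (Some (Pk A C e e' 0 \<sigma> \<tau>)) (os.F (\<lambda>k. Some (Pk A C e e' (Suc k) \<sigma> \<tau>)) {..<n})"
proof -
  have "U A C e e' (Suc n) \<sigma> \<tau> = oadd A (Some (Pk A C e e' 0 \<sigma> \<tau>)) (os.F (\<lambda>k. Some (Pk A C e e' k \<sigma> \<tau>)) (Suc ` {..<n}))"
    unfolding U_def lessThan_Suc_eq_insert_0 by (rule os.insert) auto
  also have "os.F (\<lambda>k. Some (Pk A C e e' k \<sigma> \<tau>)) (Suc ` {..<n}) = os.F (\<lambda>k. Some (Pk A C e e' (Suc k) \<sigma> \<tau>)) {..<n}"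
    by (subst os.reindex) (auto simp: comp_def)
  finally show ?thesis .
qed

lemma Phi_R: "total_sem A C \<Longrightarrow> Phi_iter A C e e' n = R A C e e' n"
proof (induction n)
  case 0
  have "inW A (\<lambda>\<tau>. pzero A)" using inW_wzero unfolding wzero_def .
  then show ?case by (simp add: R_def U_def lift_kernel_def wzero_def)
next
  case (Suc n)
  note C = Suc.prems
  show ?case
  proof (cases "R A C e e' n")
    case None
    then obtain \<sigma> where \<sigma>: "\<not> ((\<forall>\<tau>. U A C e e' n \<sigma> \<tau> \<noteq> None) \<and> inW A (\<lambda>\<tau>. the (U A C e e' n \<sigma> \<tau>)))"
      unfolding R_def lift_kernel_None by (auto split: if_splits)
    have "\<not> ((\<forall>\<tau>. U A C e e' (Suc n) \<sigma> \<tau> \<noteq> None) \<and> inW A (\<lambda>\<tau>. the (U A C e e' (Suc n) \<sigma> \<tau>)))"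
    proof
      assume a: "(\<forall>\<tau>. U A C e e' (Suc n) \<sigma> \<tau> \<noteq> None) \<and> inW A (\<lambda>\<tau>. the (U A C e e' (Suc n) \<sigma> \<tau>))"
      have d: "\<exists>x y. U A C e e' n \<sigma> \<tau> = Some x \<and> padd A x (Pk A C e e' n \<sigma> \<tau>) = Some y \<and> U A C e e' (Suc n) \<sigma> \<tau> = Some y" for \<tau>
      proof -
        obtain y where y: "U A C e e' (Suc n) \<sigma> \<tau> = Some y" using a by auto
        then have "oadd A (U A C e e' n \<sigma> \<tau>) (Some (Pk A C e e' n \<sigma> \<tau>)) = Some y" by (simp add: U_Suc)
        from oadd_Some[OF this] obtain x where "U A C e e' n \<sigma> \<tau> = Some x" "padd A x (Pk A C e e' n \<sigma> \<tau>) = Some y" by auto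
        then show ?thesis using y by auto
      qed
      have "\<forall>\<tau>. U A C e e' n \<sigma> \<tau> \<noteq> None" using d by fastforce
      moreover have "inW A (\<lambda>\<tau>. the (U A C e e' n \<sigma> \<tau>))"
      proof (rule inW_dom[of _ "\<lambda>\<tau>. the (U A C e e' (Suc n) \<sigma> \<tau>)"])
        fix \<tau>
        from d[of \<tau>] obtain x y where "U A C e e' n \<sigma> \<tau> = Some x" "padd A x (Pk A C e e' n \<sigma> \<tau>) = Some y"
          "U A C e e' (Suc n) \<sigma> \<tau> = Some y" by auto
        then show "nle A (the (U A C e e' n \<sigma> \<tau>)) (the (U A C e e' (Suc n) \<sigma> \<tau>))" using add_le by auto
      next
        show "inW A (\<lambda>\<tau>. the (U A C e e' (Suc n) \<sigma> \<tau>))" using a by auto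
      qed
      ultimately show False using \<sigma> by auto
    qed
    then have "R A C e e' (Suc n) = None" unfolding R_def lift_kernel_None by auto
    then show ?thesis using Suc.IH[OF C] None by simp
  next
    case (Some F)
    have FU: "U A C e e' n \<sigma> \<tau> = Some (F \<sigma> \<tau>)" and FW: "inW A (F \<sigma>)" for \<sigma> \<tau>
    proof -
      have "(if (\<forall>\<tau>. U A C e e' n \<sigma> \<tau> \<noteq> None) \<and> inW A (\<lambda>\<tau>. the (U A C e e' n \<sigma> \<tau>))
          then Some (\<lambda>\<tau>. the (U A C e e' n \<sigma> \<tau>)) else None) = Some (F \<sigma>)"
        using lift_kernel_Some[OF Some[unfolded R_def]] .
      then have c: "(\<forall>\<tau>. U A C e e' n \<sigma> \<tau> \<noteq> None) \<and> inW A (\<lambda>\<tau>. the (U A C e e' n \<sigma> \<tau>))"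
        and f: "F \<sigma> = (\<lambda>\<tau>. the (U A C e e' n \<sigma> \<tau>))" by (auto split: if_splits)
      show "U A C e e' n \<sigma> \<tau> = Some (F \<sigma> \<tau>)" using c f by auto
      show "inW A (F \<sigma>)" using c f by auto
    qed
    have kF: "kW F" unfolding kW_def using FW by auto
    have key: "padd A (wscale A (esem A e \<sigma>) (bv A F (Ksem A C \<sigma>)) \<tau>) (wscale A (esem A e' \<sigma>) (eta A \<sigma>) \<tau>)
        = U A C e e' (Suc n) \<sigma> \<tau>" for \<sigma> \<tau>
    proof -
      define m where "m = Ksem A C \<sigma>"
      have mW: "inW A m" unfolding m_def by (rule K_inW[OF C])
      have "has_psum A (\<lambda>k. bv A (Pk A C e e' k) m \<tau>) {..<n} (bv A F m \<tau>)"
      proof (rule fub_swap[of UNIV "\<lambda>\<rho> k. pmul A (m \<rho>) (Pk A C e e' k \<rho> \<tau>)" "{..<n}" "\<lambda>\<rho>. pmul A (m \<rho>) (F \<rho> \<tau>)"])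
        fix \<rho>
        have "os.F (\<lambda>k. Some (Pk A C e e' k \<rho> \<tau>)) {..<n} = Some (F \<rho> \<tau>)" using FU[of \<rho> \<tau>] unfolding U_def .
        from fs_distl[OF _ this, of "m \<rho>"]
        show "has_psum A (\<lambda>k. pmul A (m \<rho>) (Pk A C e e' k \<rho> \<tau>)) {..<n} (pmul A (m \<rho>) (F \<rho> \<tau>))"
          by (simp add: hp_finite)
      next
        show "has_psum A (\<lambda>\<rho>. pmul A (m \<rho>) (F \<rho> \<tau>)) UNIV (bv A F m \<tau>)" by (rule bv_hp[OF mW kF])
      next
        fix k
        show "has_psum A (\<lambda>\<rho>. pmul A (m \<rho>) (Pk A C e e' k \<rho> \<tau>)) UNIV (bv A (Pk A C e e' k) m \<tau>)"
          by (rule bv_hp[OF mW kW_Pk[OF C]])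
      qed
      then have "os.F (\<lambda>k. Some (bv A (Pk A C e e' k) m \<tau>)) {..<n} = Some (bv A F m \<tau>)" by (simp add: hp_finite)
      from fs_distl[OF _ this, of "esem A e \<sigma>"]
      have "os.F (\<lambda>k. Some (pmul A (esem A e \<sigma>) (bv A (Pk A C e e' k) m \<tau>))) {..<n} = Some (pmul A (esem A e \<sigma>) (bv A F m \<tau>))"
        by auto
      moreover have "pmul A (esem A e \<sigma>) (bv A (Pk A C e e' k) m \<tau>) = Pk A C e e' (Suc k) \<sigma> \<tau>" for k
        using Pk_Suc[OF C, of e e' k \<sigma>] unfolding m_def wscale_def by simp
      ultimately have "os.F (\<lambda>k. Some (Pk A C e e' (Suc k) \<sigma> \<tau>)) {..<n} = Some (pmul A (esem A e \<sigma>) (bv A F m \<tau>))"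
        by simp
      then have "U A C e e' (Suc n) \<sigma> \<tau> = padd A (Pk A C e e' 0 \<sigma> \<tau>) (pmul A (esem A e \<sigma>) (bv A F m \<tau>))"
        by (simp add: U_Suc0)
      also have "\<dots> = padd A (pmul A (esem A e \<sigma>) (bv A F m \<tau>)) (Pk A C e e' 0 \<sigma> \<tau>)" by (rule add_comm)
      finally show ?thesis using Pk_0[OF C] unfolding m_def wscale_def by simp
    qed
    have "Phi A C e e' F = R A C e e' (Suc n)"
    proof -
      have "Option.bind (sem A C \<sigma>) (\<lambda>m. Option.bind (bind A F m) (\<lambda>m'.
          wadd A (wscale A (esem A e \<sigma>) m') (wscale A (esem A e' \<sigma>) (eta A \<sigma>))))
        = (if (\<forall>\<tau>. U A C e e' (Suc n) \<sigma> \<tau> \<noteq> None) \<and> inW A (\<lambda>\<tau>. the (U A C e e' (Suc n) \<sigma> \<tau>))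
           then Some (\<lambda>\<tau>. the (U A C e e' (Suc n) \<sigma> \<tau>)) else None)" for \<sigma>
      proof -
        have b: "bind A F (Ksem A C \<sigma>) = Some (bv A F (Ksem A C \<sigma>))" using bind_ok[OF K_inW[OF C] kF] by auto
        show ?thesis using sem_K[OF C, of \<sigma>] b unfolding wadd_def by (simp add: key)
      qed
      then show ?thesis unfolding Phi_def R_def by simp
    qed
    then show ?thesis using Suc.IH[OF C] Some by simp
  qed
qed

end

theorem lemmaB2:
  fixes A :: "'u psemiring" and C :: "('s, 'u) prog" and e e' :: "('s, 'u) expr" and n :: nat
  assumes "good_semiring A"
    and "total_sem A C"
    and "\<forall>k\<le>n. total_sem A (Seq (ppow (Seq (Assume e) C) k) (Assume e'))"
  shows "Phi_iter A C e e' (Suc n)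
           = sem_sum A (map (\<lambda>k. Seq (ppow (Seq (Assume e) C) k) (Assume e')) [0..<Suc n])"
proof -
  interpret gs A by (rule gs.intro[OF assms(1)])
  show ?thesis by (simp only: Phi_R[OF assms(2)] sem_sum_R[OF assms(2)])
qed

end
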